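(* Let $M\ge L>N\ge1$ be integers and $1\le n\le L-N+1$. The number $Z^{(1)}_{L,M,N}(n)$ of configurations of the four-vertex model with scalar-product boundary conditions in which the vertex $(n,\,n+M-L+N-1)$ is of type $b$ (equivalently, in which the last vertex of type $b$ along the leftmost path has horizontal coordinate $n$) is $$Z^{(1)}_{L,M,N}(n)=\frac{(M-L-1+n)!\,(L-n)!}{(n-1)!\,(L-n-N+1)!\,(M-L+N-1)!}\,Z_{L,M-1,N-1},$$ where $Z_{L',M',N'}=\prod_{j=1}^{N'}\frac{(j-1)!(M'-N'+j)!}{(L'-N'+j-1)!(M'-L'+j)!}$ (empty product $=1$).
   Context: Four-vertex model: on the grid of vertices $(n,m)$, $1\le n\le L$, $1\le m\le M$ ($n$ rightward, $m$ upward), every edge (including boundary edges sticking out of the rectangle) is thick or thin, such that at every vertex the four incident edges form one of four allowed local configurations: type $a$: all thin; type $b$: both vertical edges thick, both horizontal thin; type $c$ (two kinds): south and east thick, west and north thin; or west and north thick, south and east thin. Thick edges thus form up/right paths; the leftmost path is the one entering through the south boundary edge of column 1. Scalar-product boundary conditions: the south boundary vertical edges in columns $1,\dots,N$ and the north boundary vertical edges in columns $L-N+1,\dots,L$ are thick; all other boundary edges are thin. *)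

theory Defs
  imports Complex_Main
begin

text \<open>A configuration is a pair (h, v) of edge-colourings
(True = thick, False = thin):
  h i m  (0 \<le> i \<le> L, 1 \<le> m \<le> M) : horizontal edge joining (i,m) and (i+1,m);
          i = 0 and i = L are the west/east boundary edges;
  v n j  (1 \<le> n \<le> L, 0 \<le> j \<le> M) : vertical edge joining (n,j) and (n,j+1);
          j = 0 and j = M are the south/north boundary edges.
Outside these ranges both functions are fixed to False, so that configurations
are in bijection with edge colourings of the grid.\<close>

definition vertex_ok :: "bool \<Rightarrow> bool \<Rightarrow> bool \<Rightarrow> bool \<Rightarrow> bool" where
  "vertex_ok w e s n \<longleftrightarrow>
     (\<not> w \<and> \<not> e \<and> \<not> s \<and> \<not> n) \<or>
     (s \<and> n \<and> \<not> w \<and> \<not> e) \<or>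
     (s \<and> e \<and> \<not> w \<and> \<not> n) \<or>
     (w \<and> n \<and> \<not> s \<and> \<not> e)"

definition vertex_b :: "bool \<Rightarrow> bool \<Rightarrow> bool \<Rightarrow> bool \<Rightarrow> bool" where
  "vertex_b w e s n \<longleftrightarrow> s \<and> n \<and> \<not> w \<and> \<not> e"

definition sp_configs :: "nat \<Rightarrow> nat \<Rightarrow> nat \<Rightarrow>
    ((nat \<Rightarrow> nat \<Rightarrow> bool) \<times> (nat \<Rightarrow> nat \<Rightarrow> bool)) set" where
  "sp_configs L M N = {(h, v).
     (\<forall>i m. \<not> (i \<le> L \<and> 1 \<le> m \<and> m \<le> M) \<longrightarrow> \<not> h i m) \<and>
     (\<forall>n j. \<not> (1 \<le> n \<and> n \<le> L \<and> j \<le> M) \<longrightarrow> \<not> v n j) \<and>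
     (\<forall>m. 1 \<le> m \<and> m \<le> M \<longrightarrow> \<not> h 0 m \<and> \<not> h L m) \<and>
     (\<forall>n. 1 \<le> n \<and> n \<le> L \<longrightarrow> (v n 0 \<longleftrightarrow> n \<le> N)) \<and>
     (\<forall>n. 1 \<le> n \<and> n \<le> L \<longrightarrow> (v n M \<longleftrightarrow> L - N + 1 \<le> n)) \<and>
     (\<forall>n m. 1 \<le> n \<and> n \<le> L \<and> 1 \<le> m \<and> m \<le> M \<longrightarrow>
        vertex_ok (h (n - 1) m) (h n m) (v n (m - 1)) (v n m))}"

definition is_b_at :: "(nat \<Rightarrow> nat \<Rightarrow> bool) \<times> (nat \<Rightarrow> nat \<Rightarrow> bool) \<Rightarrow> nat \<Rightarrow> nat \<Rightarrow> bool" where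
  "is_b_at c n m = (case c of (h, v) \<Rightarrow> vertex_b (h (n - 1) m) (h n m) (v n (m - 1)) (v n m))"

text \<open>Z_{L,M,N} = prod_{j=1}^N (j-1)! (M-N+j)! / ((L-N+j-1)! (M-L+j)!) (written with
additions first so that natural-number subtraction does not truncate in the range of use).\<close>
definition Zsp :: "nat \<Rightarrow> nat \<Rightarrow> nat \<Rightarrow> real" where
  "Zsp L M N = (\<Prod>j = 1..N. (fact (j - 1) * fact (M + j - N)) /
                            (fact (L + j - N - 1) * fact (M + j - L)))"

end

theory Submission
  imports Defs Jordan_Normal_Form.Determinant
begin


definition ff :: "real \<Rightarrow> nat \<Rightarrow> real" where "ff x k = (\<Prod>i<k. x - real i)"

lemma ff_0[simp]: "ff x 0 = 1" by (simp add: ff_def)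
lemma ff_Suc: "ff x (Suc k) = ff x k * (x - real k)" by (simp add: ff_def)

lemma det_rows_factor:
  fixes r :: "nat \<Rightarrow> 'a::comm_ring_1"
  shows "det (mat n n (\<lambda>(i,c). r i * a i c)) = (\<Prod>i<n. r i) * det (mat n n (\<lambda>(i,c). a i c))"
proof -
  have A: "mat n n (\<lambda>(i,c). r i * a i c) \<in> carrier_mat n n" by simp
  have B: "mat n n (\<lambda>(i,c). a i c) \<in> carrier_mat n n" by simp
  show ?thesis unfolding det_def'[OF A] det_def'[OF B] sum_distrib_left
  proof (rule sum.cong[OF refl])
    fix p assume p: "p \<in> {p. p permutes {0..<n}}"
    have "(\<Prod>i = 0..<n. mat n n (\<lambda>(i,c). r i * a i c) $$ (i, p i)) =
          (\<Prod>i = 0..<n. r i * a i (p i))"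
      using p by (intro prod.cong) (auto simp: permutes_def)
    also have "\<dots> = (\<Prod>i<n. r i) * (\<Prod>i = 0..<n. mat n n (\<lambda>(i,c). a i c) $$ (i, p i))"
      unfolding prod.distrib using p
      by (auto simp: atLeast0LessThan permutes_def intro!: prod.cong arg_cong2[where f="(*)"])
    finally show "of_int (sign p) * (\<Prod>i = 0..<n. mat n n (\<lambda>(i,c). r i * a i c) $$ (i, p i)) =
        (\<Prod>i<n. r i) * (of_int (sign p) * (\<Prod>i = 0..<n. mat n n (\<lambda>(i,c). a i c) $$ (i, p i)))"
      by simp
  qed
qed

lemma det_cols_factor:
  fixes q :: "nat \<Rightarrow> 'a::comm_ring_1"
  shows "det (mat n n (\<lambda>(i,c). a i c * q c)) = (\<Prod>c<n. q c) * det (mat n n (\<lambda>(i,c). a i c))"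
proof -
  have "det (mat n n (\<lambda>(i,c). a i c * q c)) = det (transpose_mat (mat n n (\<lambda>(i,c). a i c * q c)))"
    by (simp add: det_transpose[of _ n])
  also have "transpose_mat (mat n n (\<lambda>(i,c). a i c * q c)) = mat n n (\<lambda>(i,c). q i * a c i)"
    by (rule eq_matI) auto
  also have "det \<dots> = (\<Prod>c<n. q c) * det (mat n n (\<lambda>(i,c). a c i))"
    by (rule det_rows_factor)
  also have "mat n n (\<lambda>(i,c). a c i) = transpose_mat (mat n n (\<lambda>(i,c). a i c))"
    by (rule eq_matI) auto
  also have "det \<dots> = det (mat n n (\<lambda>(i,c). a i c))" by (simp add: det_transpose[of _ n])
  finally show ?thesis .
qed

lemma vander_ff:
  "det (mat n n (\<lambda>(i,c). ff (y i) c)) = (\<Prod>j<n. \<Prod>i<j. (y j - y i))"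
proof (induction n arbitrary: y)
  case 0
  show ?case by (simp add: det_dim_zero)
next
  case (Suc n)
  define A where "A = mat (Suc n) (Suc n) (\<lambda>(i,c). ff (y i) c)"
  define U where "U = mat (Suc n) (Suc n) (\<lambda>(k,c). if k = c then 1 else if Suc k = c then - (y 0 - real k) else (0::real))"
  have A: "A \<in> carrier_mat (Suc n) (Suc n)" and U: "U \<in> carrier_mat (Suc n) (Suc n)"
    by (auto simp: A_def U_def)
  have ut: "upper_triangular U" unfolding U_def upper_triangular_def by auto
  have dU: "det U = 1"
  proof -
    have "det U = prod_list (diag_mat U)" by (rule det_upper_triangular[OF ut U])
    also have "diag_mat U = map (\<lambda>i. 1) [0..<Suc n]"
      unfolding diag_mat_def by (rule map_cong) (auto simp: U_def)
    finally show ?thesis by (simp add: map_replicate_const del: upt_Suc)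
  qed
  define B where "B = A * U"
  have B: "B \<in> carrier_mat (Suc n) (Suc n)" using A U by (auto simp: B_def)
  have Bent: "B $$ (i,c) = (if c = 0 then ff (y i) 0 else ff (y i) (c - 1) * (y i - y 0))"
    if "i < Suc n" "c < Suc n" for i c
  proof -
    have "B $$ (i,c) = (\<Sum>k<Suc n. A $$ (i,k) * U $$ (k,c))"
      using that A U by (simp add: B_def scalar_prod_def lessThan_atLeast0 atLeast0LessThan[symmetric] sum.atLeast0_lessThan_Suc)
    also have "\<dots> = (\<Sum>k\<in>{c} \<union> (if c = 0 then {} else {c - 1}). A $$ (i,k) * U $$ (k,c))"
      using that by (intro sum.mono_neutral_right) (auto simp: U_def)
    also have "\<dots> = (if c = 0 then ff (y i) 0 else ff (y i) (c - 1) * (y i - y 0))"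
      using that
      apply (cases c)
       apply (auto simp: A_def U_def ff_Suc algebra_simps)
      done
    finally show ?thesis .
  qed
  have "det A = det B" using det_mult[OF A U] dU by (simp add: B_def)
  also have "det B = (\<Sum>j<Suc n. B $$ (0,j) * cofactor B 0 j)"
    by (rule laplace_expansion_row[OF B]) simp
  also have "\<dots> = B $$ (0,0) * cofactor B 0 0"
  proof -
    have "(\<Sum>j<n. B $$ (0, Suc j) * cofactor B 0 (Suc j)) = 0"
      by (rule sum.neutral) (auto simp: Bent)
    then show ?thesis by (simp only: sum.lessThan_Suc_shift)
  qed
  also have "\<dots> = det (mat_delete B 0 0)" by (simp add: Bent cofactor_def)
  also have "mat_delete B 0 0 = mat n n (\<lambda>(i,c). (y (Suc i) - y 0) * ff (y (Suc i)) c)"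
    using B by (intro eq_matI) (auto simp: mat_delete_def Bent)
  also have "det \<dots> = (\<Prod>i<n. y (Suc i) - y 0) * det (mat n n (\<lambda>(i,c). ff (y (Suc i)) c))"
    by (rule det_rows_factor)
  also have "det (mat n n (\<lambda>(i,c). ff (y (Suc i)) c)) = (\<Prod>j<n. \<Prod>i<j. (y (Suc j) - y (Suc i)))"
    using Suc.IH[of "\<lambda>i. y (Suc i)"] by simp
  also have "(\<Prod>i<n. y (Suc i) - y 0) * (\<Prod>j<n. \<Prod>i<j. (y (Suc j) - y (Suc i))) =
     (\<Prod>j<Suc n. \<Prod>i<j. (y j - y i))"
    unfolding prod.lessThan_Suc_shift by (simp add: prod.distrib)
  finally show ?case by (simp add: A_def)
qed

lemma ff_add: "ff x (a + b) = ff x a * ff (x - real a) b"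
  by (induction b) (auto simp: ff_Suc algebra_simps)

lemma choose_ff: "real (z choose k) = ff (real z) k / fact k"
  by (simp add: binomial_gbinomial gbinomial_prod_rev ff_def atLeast0LessThan)

fun g :: "nat \<Rightarrow> nat \<Rightarrow> nat \<Rightarrow> real" where
  "g 0 j x = (if x = j then 1 else 0)"
| "g (Suc s) j x = (\<Sum>y\<in>{1..x}. g s j y)"

lemma g_Suc_Suc: "g (Suc s) j (Suc x) = g (Suc s) j x + g s j (Suc x)"
  by (simp add: sum.cl_ivl_Suc)

lemma g_Suc_0[simp]: "g (Suc s) j 0 = 0" by simp

lemma g1: "1 \<le> j \<Longrightarrow> g (Suc 0) j x = (if j \<le> x then 1 else 0)"
  by (induction x) (auto simp: g_Suc_Suc)

lemma g_pascal: "1 \<le> j \<Longrightarrow> g (Suc s) j x - g (Suc s) (Suc j) x = g s j x"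
proof (induction s arbitrary: x)
  case 0
  then show ?case by (simp add: g1)
next
  case (Suc s)
  have "g (Suc (Suc s)) j x - g (Suc (Suc s)) (Suc j) x =
        (\<Sum>y\<in>{1..x}. g (Suc s) j y - g (Suc s) (Suc j) y)"
    by (simp add: sum_subtractf)
  also have "\<dots> = (\<Sum>y\<in>{1..x}. g s j y)" using Suc by simp
  finally show ?case by simp
qed

lemma g_closed: "1 \<le> j \<Longrightarrow> g (Suc s) j x = (if j \<le> x then real ((x - j + s) choose s) else 0)"
proof (induction s arbitrary: x)
  case 0
  then show ?case by (simp add: g1)
next
  case (Suc s)
  note outer = Suc.IH
  note jj = Suc.prems
  show ?case
  proof (induction x)
    case 0
    then show ?case using jj by simp
  next
    case (Suc x)
    have "g (Suc (Suc s)) j (Suc x) = g (Suc (Suc s)) j x + g (Suc s) j (Suc x)"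
      by (rule g_Suc_Suc)
    also note Suc.IH
    also note outer[of "Suc x", OF jj]
    finally have e: "g (Suc (Suc s)) j (Suc x) =
      (if j \<le> x then real (x - j + Suc s choose Suc s) else 0) +
      (if j \<le> Suc x then real (Suc x - j + s choose s) else 0)" .
    show ?case
    proof (cases "j \<le> x")
      case True
      then have "Suc x - j + Suc s = Suc (x - j + Suc s)" by simp
      moreover have "Suc x - j + s = x - j + Suc s" using True by simp
      ultimately show ?thesis using e True jj
        by (simp only: binomial_Suc_Suc) (simp add: add.commute)
    next
      case False
      then show ?thesis using e jj
        by (cases "j = Suc x") auto
    qed
  qed
qed

lemma det_colops_step:
  fixes lev :: "nat \<Rightarrow> nat" and x :: "nat \<Rightarrow> nat"
  assumes "\<And>c. c < q \<Longrightarrow> lev c = Suc t" and "\<And>c. c < q \<Longrightarrow> lev (Suc c) = Suc t" and "q < n"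
  shows "det (mat n n (\<lambda>(i,c). g (lev c) (Suc c) (x i))) =
         det (mat n n (\<lambda>(i,c). g (if c < q then t else lev c) (Suc c) (x i)))"
proof -
  define A where "A = mat n n (\<lambda>(i,c). g (lev c) (Suc c) (x i))"
  define U where "U = mat n n (\<lambda>(k,c). if k = c then 1 else if k = Suc c \<and> c < q then -1 else (0::real))"
  have A: "A \<in> carrier_mat n n" and U: "U \<in> carrier_mat n n" by (auto simp: A_def U_def)
  have dU: "det U = 1"
  proof -
    have "det U = prod_list (diag_mat U)" by (rule det_lower_triangular[OF _ U]) (auto simp: U_def)
    also have "diag_mat U = map (\<lambda>i. 1) [0..<n]"
      unfolding diag_mat_def by (rule map_cong) (auto simp: U_def)
    finally show ?thesis by (simp add: map_replicate_const del: upt_Suc)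
  qed
  have "A * U = mat n n (\<lambda>(i,c). g (if c < q then t else lev c) (Suc c) (x i))"
  proof (rule eq_matI)
    fix i c assume i: "i < dim_row (mat n n (\<lambda>(i,c). g (if c < q then t else lev c) (Suc c) (x i)))"
      and c: "c < dim_col (mat n n (\<lambda>(i,c). g (if c < q then t else lev c) (Suc c) (x i)))"
    then have i: "i < n" and c: "c < n" by auto
    have "(A * U) $$ (i,c) = (\<Sum>k\<in>{0..<n}. A $$ (i,k) * U $$ (k,c))"
      using i c A U by (simp add: scalar_prod_def)
    also have "\<dots> = (\<Sum>k\<in>{c} \<union> (if c < q then {Suc c} else {}). A $$ (i,k) * U $$ (k,c))"
      using i c assms(3) by (intro sum.mono_neutral_right) (auto simp: U_def)
    also have "\<dots> = g (if c < q then t else lev c) (Suc c) (x i)"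
    proof (cases "c < q")
      case True
      have "Suc c < n" using True assms(3) by simp
      then have "(\<Sum>k\<in>{c} \<union> (if c < q then {Suc c} else {}). A $$ (i,k) * U $$ (k,c)) =
         g (Suc t) (Suc c) (x i) - g (Suc t) (Suc (Suc c)) (x i)"
        using True i c assms(1,2) by (simp add: A_def U_def)
      also have "\<dots> = g t (Suc c) (x i)" by (rule g_pascal) simp
      finally show ?thesis using True by simp
    qed (use i c in \<open>simp add: A_def U_def\<close>)
    finally show "(A * U) $$ (i,c) = mat n n (\<lambda>(i,c). g (if c < q then t else lev c) (Suc c) (x i)) $$ (i,c)"
      using i c by simp
  qed (use A U in auto)
  moreover have "det (A * U) = det A" using det_mult[OF A U] dU by simp
  ultimately show ?thesis by (simp add: A_def)
qed

lemma det_colops: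
  assumes "r < n" "n \<le> s"
  shows "det (mat n n (\<lambda>(i,c). g s (Suc c) (x i))) =
         det (mat n n (\<lambda>(i,c). g (if c + r < n then s - r else s + 1 + c - n) (Suc c) (x i)))"
  using assms
proof (induction r)
  case 0
  then show ?case by (intro arg_cong[where f=det] eq_matI) auto
next
  case (Suc r)
  let ?lev = "\<lambda>c. if c + r < n then s - r else s + 1 + c - n"
  have "det (mat n n (\<lambda>(i,c). g s (Suc c) (x i))) = det (mat n n (\<lambda>(i,c). g (?lev c) (Suc c) (x i)))"
    using Suc by simp
  also have "\<dots> = det (mat n n (\<lambda>(i,c). g (if c < n - Suc r then s - Suc r else ?lev c) (Suc c) (x i)))"
    by (rule det_colops_step[where t = "s - Suc r"]) (use Suc.prems in auto)
  also have "(\<lambda>c. if c < n - Suc r then s - Suc r else ?lev c) =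
             (\<lambda>c. if c + Suc r < n then s - Suc r else s + 1 + c - n)"
    using Suc.prems by (auto simp: fun_eq_iff)
  finally show ?case by simp
qed

lemma det_g_eval:
  assumes "n \<le> s" and "\<And>i. i < n \<Longrightarrow> 1 \<le> x i"
  shows "det (mat n n (\<lambda>(i,c). g s (Suc c) (x i))) =
    (\<Prod>i<n. ff (real (x i - 1 + (s - n))) (s - n)) * (\<Prod>c<n. 1 / fact (s - n + c)) *
    (\<Prod>j<n. \<Prod>i<j. (real (x j) - real (x i)))"
proof (cases "n = 0")
  case True
  then show ?thesis by (simp add: det_dim_zero)
next
  case False
  have "det (mat n n (\<lambda>(i,c). g s (Suc c) (x i))) =
         det (mat n n (\<lambda>(i,c). g (if c + (n - 1) < n then s - (n - 1) else s + 1 + c - n) (Suc c) (x i)))"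
    by (rule det_colops) (use assms False in auto)
  also have "mat n n (\<lambda>(i,c). g (if c + (n - 1) < n then s - (n - 1) else s + 1 + c - n) (Suc c) (x i)) =
     mat n n (\<lambda>(i,c). ff (real (x i - 1 + (s - n))) (s - n) * ff (real (x i) - 1) c * (1 / fact (s - n + c)))"
  proof (rule eq_matI)
    fix i c assume "i < dim_row (mat n n (\<lambda>(i, c). ff (real (x i - 1 + (s - n))) (s - n) * ff (real (x i) - 1) c * (1 / fact (s - n + c))))"
      "c < dim_col (mat n n (\<lambda>(i, c). ff (real (x i - 1 + (s - n))) (s - n) * ff (real (x i) - 1) c * (1 / fact (s - n + c))))"
    then have i: "i < n" and c: "c < n" by auto
    have xi: "1 \<le> x i" using assms(2) i .
    have lev: "(if c + (n - 1) < n then s - (n - 1) else s + 1 + c - n) = Suc (s - n + c)"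
      using assms(1) c False by auto
    have "g (Suc (s - n + c)) (Suc c) (x i) = real ((x i - 1 + (s - n)) choose (s - n + c))"
    proof (cases "Suc c \<le> x i")
      case True
      then have "x i - Suc c + (s - n + c) = x i - 1 + (s - n)" by simp
      then show ?thesis using True by (subst g_closed) simp_all
    next
      case False
      then have "x i - 1 + (s - n) < s - n + c" using xi by simp
      then show ?thesis using False by (subst g_closed) simp_all
    qed
    also have "\<dots> = ff (real (x i - 1 + (s - n))) ((s - n) + c) / fact (s - n + c)"
      by (simp add: choose_ff)
    also have "\<dots> = ff (real (x i - 1 + (s - n))) (s - n) * ff (real (x i) - 1) c * (1 / fact (s - n + c))"
      using xi by (simp add: ff_add of_nat_diff)
    finally show "mat n n (\<lambda>(i,c). g (if c + (n - 1) < n then s - (n - 1) else s + 1 + c - n) (Suc c) (x i)) $$ (i, c) =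
       mat n n (\<lambda>(i,c). ff (real (x i - 1 + (s - n))) (s - n) * ff (real (x i) - 1) c * (1 / fact (s - n + c))) $$ (i, c)"
      using i c lev by simp
  qed auto
  also have "det \<dots> = (\<Prod>i<n. ff (real (x i - 1 + (s - n))) (s - n)) *
       det (mat n n (\<lambda>(i,c). ff (real (x i) - 1) c * (1 / fact (s - n + c))))"
    using det_rows_factor[where r="\<lambda>i. ff (real (x i - 1 + (s - n))) (s - n)" and a="\<lambda>i c. ff (real (x i) - 1) c * (1 / fact (s - n + c))" and n=n]
    by (simp add: mult.assoc)
  also have "det (mat n n (\<lambda>(i,c). ff (real (x i) - 1) c * (1 / fact (s - n + c)))) =
       (\<Prod>c<n. 1 / fact (s - n + c)) * det (mat n n (\<lambda>(i,c). ff (real (x i) - 1) c))"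
    by (rule det_cols_factor)
  also have "det (mat n n (\<lambda>(i,c). ff (real (x i) - 1) c)) = (\<Prod>j<n. \<Prod>i<j. (real (x j) - 1 - (real (x i) - 1)))"
    by (rule vander_ff)
  finally show ?thesis by (simp add: mult.assoc)
qed

definition lo :: "(nat \<Rightarrow> nat) \<Rightarrow> nat \<Rightarrow> nat" where
  "lo x i = (if i = 0 then 0 else x (i - 1))"

definition box :: "nat \<Rightarrow> (nat \<Rightarrow> nat) \<Rightarrow> (nat \<Rightarrow> nat) set" where
  "box n x = PiE {0..<n} (\<lambda>i. {lo x i <.. x i})"

lemma finite_box: "finite (box n x)"
  unfolding box_def by (intro finite_PiE) auto

lemma g_interval: "a \<le> b \<Longrightarrow> (\<Sum>t\<in>{a<..b}. g s j t) = g (Suc s) j b - g (Suc s) j a"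
proof -
  assume ab: "a \<le> b"
  have "{1..b} = {1..a} \<union> {a<..b}" using ab by auto
  then have "g (Suc s) j b = g (Suc s) j a + (\<Sum>t\<in>{a<..b}. g s j t)"
    by (simp add: sum.union_disjoint ivl_disj_int)
  then show ?thesis by simp
qed

lemma det_box_sum:
  fixes x :: "nat \<Rightarrow> nat"
  assumes mono: "\<And>i. Suc i < n \<Longrightarrow> x i \<le> x (Suc i)"
  shows "det (mat n n (\<lambda>(i,c). g (Suc s) (Suc c) (x i))) =
         (\<Sum>y\<in>box n x. det (mat n n (\<lambda>(i,c). g s (Suc c) (y i))))"
proof -
  have lox: "lo x i \<le> x i" if "i < n" for i
    using that mono by (cases i) (auto simp: lo_def)
  have Mc: "\<And>f. mat n n f \<in> carrier_mat n n" by simp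
  have "(\<Sum>y\<in>box n x. det (mat n n (\<lambda>(i,c). g s (Suc c) (y i)))) =
        (\<Sum>y\<in>box n x. \<Sum>p | p permutes {0..<n}. of_int (sign p) * (\<Prod>i=0..<n. g s (Suc (p i)) (y i)))"
  proof (rule sum.cong[OF refl])
    fix y assume "y \<in> box n x"
    show "det (mat n n (\<lambda>(i,c). g s (Suc c) (y i))) =
        (\<Sum>p | p permutes {0..<n}. of_int (sign p) * (\<Prod>i=0..<n. g s (Suc (p i)) (y i)))"
      unfolding det_def'[OF Mc]
      by (intro sum.cong refl arg_cong2[where f="(*)"] prod.cong) (auto simp: permutes_def)
  qed
  also have "\<dots> = (\<Sum>p | p permutes {0..<n}. \<Sum>y\<in>box n x. of_int (sign p) * (\<Prod>i=0..<n. g s (Suc (p i)) (y i)))"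
    by (rule sum.swap)
  also have "\<dots> = (\<Sum>p | p permutes {0..<n}. of_int (sign p) * (\<Prod>i=0..<n. \<Sum>t\<in>{lo x i <.. x i}. g s (Suc (p i)) t))"
    by (intro sum.cong refl) (simp add: sum_distrib_left[symmetric] prod_sum_PiE box_def)
  also have "\<dots> = (\<Sum>p | p permutes {0..<n}. of_int (sign p) *
        (\<Prod>i=0..<n. g (Suc s) (Suc (p i)) (x i) - g (Suc s) (Suc (p i)) (lo x i)))"
    by (intro sum.cong refl arg_cong2[where f="(*)"] prod.cong) (auto simp: g_interval lox)
  also have "\<dots> = det (mat n n (\<lambda>(i,c). g (Suc s) (Suc c) (x i) - g (Suc s) (Suc c) (lo x i)))"
    unfolding det_def'[OF Mc]
    by (intro sum.cong refl arg_cong2[where f="(*)"] prod.cong) (auto simp: permutes_def)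
  also have "\<dots> = det (mat n n (\<lambda>(i,c). g (Suc s) (Suc c) (x i)))"
  proof -
    define A where "A = mat n n (\<lambda>(i,c). g (Suc s) (Suc c) (x i))"
    define D where "D = mat n n (\<lambda>(i,k). if k = i then 1 else if Suc k = i then -1 else (0::real))"
    have A: "A \<in> carrier_mat n n" and D: "D \<in> carrier_mat n n" by (auto simp: A_def D_def)
    have dD: "det D = 1"
    proof -
      have "det D = prod_list (diag_mat D)" by (rule det_lower_triangular[OF _ D]) (auto simp: D_def)
      also have "diag_mat D = map (\<lambda>i. 1) [0..<n]"
        unfolding diag_mat_def by (rule map_cong) (auto simp: D_def)
      finally show ?thesis by (simp add: map_replicate_const del: upt_Suc)
    qed
    have "D * A = mat n n (\<lambda>(i,c). g (Suc s) (Suc c) (x i) - g (Suc s) (Suc c) (lo x i))"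
    proof (rule eq_matI)
      fix i c assume "i < dim_row (mat n n (\<lambda>(i,c). g (Suc s) (Suc c) (x i) - g (Suc s) (Suc c) (lo x i)))"
        "c < dim_col (mat n n (\<lambda>(i,c). g (Suc s) (Suc c) (x i) - g (Suc s) (Suc c) (lo x i)))"
      then have i: "i < n" and c: "c < n" by auto
      have "(D * A) $$ (i,c) = (\<Sum>k\<in>{0..<n}. D $$ (i,k) * A $$ (k,c))"
        using i c A D by (simp add: scalar_prod_def)
      also have "\<dots> = (\<Sum>k\<in>{i} \<union> (if i = 0 then {} else {i - 1}). D $$ (i,k) * A $$ (k,c))"
        using i c by (intro sum.mono_neutral_right) (auto simp: D_def)
      also have "\<dots> = g (Suc s) (Suc c) (x i) - g (Suc s) (Suc c) (lo x i)"
        using i c by (cases i) (auto simp: D_def A_def lo_def)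
      finally show "(D * A) $$ (i,c) = mat n n (\<lambda>(i,c). g (Suc s) (Suc c) (x i) - g (Suc s) (Suc c) (lo x i)) $$ (i,c)"
        using i c by simp
    qed (use A D in auto)
    moreover have "det (D * A) = det A" using det_mult[OF D A] dD by simp
    ultimately show ?thesis by (simp add: A_def)
  qed
  finally show ?thesis by simp
qed


definition delta :: "nat \<Rightarrow> nat \<Rightarrow> nat" where
  "delta n = restrict Suc {0..<n}"

fun CH :: "nat \<Rightarrow> nat \<Rightarrow> (nat \<Rightarrow> nat) \<Rightarrow> (nat \<Rightarrow> nat) list set" where
  "CH n 0 x = (if x = delta n then {[]} else {})"
| "CH n (Suc s) x = (\<Union>y\<in>box n x. (Cons y) ` CH n s y)"

lemma finite_CH: "finite (CH n s x)"
  by (induction s arbitrary: x) (auto simp: finite_box)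

lemma card_CH_Suc: "card (CH n (Suc s) x) = (\<Sum>y\<in>box n x. card (CH n s y))"
proof -
  have "card (CH n (Suc s) x) = (\<Sum>y\<in>box n x. card ((Cons y) ` CH n s y))"
    by (simp only: CH.simps) (rule card_UN_disjoint, auto simp: finite_box finite_CH)
  also have "\<dots> = (\<Sum>y\<in>box n x. card (CH n s y))"
    by (intro sum.cong refl card_image) auto
  finally show ?thesis .
qed

lemma det_delta_base:
  fixes x :: "nat \<Rightarrow> nat"
  assumes ext: "x \<in> extensional {0..<n}" and inc: "\<And>i. Suc i < n \<Longrightarrow> x i < x (Suc i)"
    and pos: "0 < n \<Longrightarrow> 1 \<le> x 0"
  shows "det (mat n n (\<lambda>(i,c). g 0 (Suc c) (x i))) = (if x = delta n then 1 else 0)"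
proof (cases "x = delta n")
  case True
  have "mat n n (\<lambda>(i,c). g 0 (Suc c) (x i)) = 1\<^sub>m n"
    by (rule eq_matI) (auto simp: True delta_def)
  then show ?thesis using True by simp
next
  case False
  have ge: "Suc i \<le> x i" if "i < n" for i
    using that
  proof (induction i)
    case 0 then show ?case using pos by simp
  next
    case (Suc i) then show ?case using inc[of i] by simp
  qed
  have "\<exists>i<n. x i \<noteq> Suc i"
  proof (rule ccontr)
    assume "\<not> (\<exists>i<n. x i \<noteq> Suc i)"
    then have "x = delta n" using ext by (auto simp: delta_def fun_eq_iff extensional_def)
    then show False using False by simp
  qed
  then obtain i where i: "i < n" "x i \<noteq> Suc i" by blast
  have gt: "Suc i < x i" using ge[OF i(1)] i(2) by simp
  have mono: "x i + k \<le> x k + i" if "i \<le> k" "k < n" for k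
    using that
  proof (induction k)
    case 0 then show ?case by simp
  next
    case (Suc k)
    show ?case
    proof (cases "i = Suc k")
      case True then show ?thesis by simp
    next
      case False
      then have "i \<le> k" using Suc.prems by simp
      then show ?thesis using Suc.IH[OF \<open>i \<le> k\<close>] Suc.prems inc[of k] by simp
    qed
  qed
  have last: "n < x (n - 1)" using mono[of "n - 1"] i gt by linarith
  have Mc: "mat n n (\<lambda>(i,c). g 0 (Suc c) (x i)) \<in> carrier_mat n n" by simp
  have "det (mat n n (\<lambda>(i,c). g 0 (Suc c) (x i))) = 0"
    unfolding det_def'[OF Mc]
  proof (rule sum.neutral, intro ballI)
    fix p assume p: "p \<in> {p. p permutes {0..<n}}"
    have "n - 1 \<in> {0..<n}" using i by auto
    moreover have "p (n - 1) < n" using p permutes_in_image[of p "{0..<n}" "n - 1"] i by auto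
    moreover have "mat n n (\<lambda>(i,c). g 0 (Suc c) (x i)) $$ (n - 1, p (n - 1)) = 0"
      using \<open>p (n - 1) < n\<close> i last by auto
    ultimately have "(\<Prod>i = 0..<n. mat n n (\<lambda>(i,c). g 0 (Suc c) (x i)) $$ (i, p i)) = 0"
      by (intro prod_zero) (simp, rule bexI[of _ "n - 1"])
    then show "of_int (sign p) * (\<Prod>i = 0..<n. mat n n (\<lambda>(i,c). g 0 (Suc c) (x i)) $$ (i, p i)) = 0"
      by simp
  qed
  then show ?thesis using False by simp
qed

lemma chain_det:
  fixes x :: "nat \<Rightarrow> nat"
  assumes ext: "x \<in> extensional {0..<n}" and inc: "\<And>i. Suc i < n \<Longrightarrow> x i < x (Suc i)"
    and pos: "0 < n \<Longrightarrow> 1 \<le> x 0"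
  shows "real (card (CH n s x)) = det (mat n n (\<lambda>(i,c). g s (Suc c) (x i)))"
  using assms
proof (induction s arbitrary: x)
  case 0
  show ?case using det_delta_base[OF 0(1-3)] by (simp del: g.simps)
next
  case (Suc s)
  have "real (card (CH n (Suc s) x)) = (\<Sum>y\<in>box n x. real (card (CH n s y)))"
    by (simp only: card_CH_Suc of_nat_sum)
  also have "\<dots> = (\<Sum>y\<in>box n x. det (mat n n (\<lambda>(i,c). g s (Suc c) (y i))))"
  proof (rule sum.cong[OF refl])
    fix y assume y: "y \<in> box n x"
    have yi: "lo x i < y i \<and> y i \<le> x i" if "i < n" for i
      using y that by (auto simp: box_def PiE_def)
    show "real (card (CH n s y)) = det (mat n n (\<lambda>(i,c). g s (Suc c) (y i)))"
    proof (rule Suc.IH)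
      show "y \<in> extensional {0..<n}" using y by (auto simp: box_def PiE_def)
      show "y i < y (Suc i)" if "Suc i < n" for i
        using yi[of i] yi[of "Suc i"] that by (auto simp: lo_def)
      show "1 \<le> y 0" if "0 < n" using yi[of 0] that by (auto simp: lo_def)
    qed
  qed
  also have "\<dots> = det (mat n n (\<lambda>(i,c). g (Suc s) (Suc c) (x i)))"
    by (rule det_box_sum[symmetric]) (use Suc.prems in \<open>auto intro: less_imp_le\<close>)
  finally show ?case .
qed

lemma CH_char:
  "ys \<in> CH n s x \<longleftrightarrow> length ys = s \<and>
     (\<forall>t<s. ys ! t \<in> box n (if t = 0 then x else ys ! (t - 1))) \<and>
     (if s = 0 then x = delta n else ys ! (s - 1) = delta n)"
proof (induction s arbitrary: x ys)
  case 0
  then show ?case by auto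
next
  case (Suc s)
  show ?case
  proof
    assume "ys \<in> CH n (Suc s) x"
    then obtain y ys' where ys: "ys = y # ys'" and y: "y \<in> box n x" and ys': "ys' \<in> CH n s y" by auto
    from Suc.IH[of ys' y] ys' have h: "length ys' = s"
      "\<forall>t<s. ys' ! t \<in> box n (if t = 0 then y else ys' ! (t - 1))"
      "(if s = 0 then y = delta n else ys' ! (s - 1) = delta n)" by auto
    show "length ys = Suc s \<and>
     (\<forall>t<Suc s. ys ! t \<in> box n (if t = 0 then x else ys ! (t - 1))) \<and>
     (if Suc s = 0 then x = delta n else ys ! (Suc s - 1) = delta n)"
    proof (intro conjI allI impI)
      show "length ys = Suc s" using ys h by simp
      fix t assume t: "t < Suc s"
      show "ys ! t \<in> box n (if t = 0 then x else ys ! (t - 1))"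
      proof (cases t)
        case 0 then show ?thesis using ys y by simp
      next
        case (Suc t') then show ?thesis using ys h(2)[rule_format, of t'] t by (cases t') auto
      qed
    next
      show "if Suc s = 0 then x = delta n else ys ! (Suc s - 1) = delta n"
        using ys h(3) by (cases s) auto
    qed
  next
    assume a: "length ys = Suc s \<and>
     (\<forall>t<Suc s. ys ! t \<in> box n (if t = 0 then x else ys ! (t - 1))) \<and>
     (if Suc s = 0 then x = delta n else ys ! (Suc s - 1) = delta n)"
    then obtain y ys' where ys: "ys = y # ys'" by (cases ys) auto
    have y: "y \<in> box n x" using a ys by force
    have "ys' \<in> CH n s y"
      unfolding Suc.IH
    proof (intro conjI allI impI)
      show "length ys' = s" using a ys by simp
      fix t assume t: "t < s"
      show "ys' ! t \<in> box n (if t = 0 then y else ys' ! (t - 1))"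
        using a[THEN conjunct2, THEN conjunct1, rule_format, of "Suc t"] t ys by (cases t) auto
    next
      show "if s = 0 then y = delta n else ys' ! (s - 1) = delta n"
        using a ys by (cases s) auto
    qed
    then show "ys \<in> CH n (Suc s) x" using ys y by auto
  qed
qed


lemma init_seg:
  assumes "T \<subseteq> {1..K::nat}" and "\<And>s s'. s \<in> T \<Longrightarrow> 1 \<le> s' \<Longrightarrow> s' \<le> s \<Longrightarrow> s' \<in> T"
  shows "T = {1..card T}"
proof (cases "T = {}")
  case True then show ?thesis by simp
next
  case False
  have fin: "finite T" using assms(1) finite_subset by blast
  define t where "t = Max T"
  have tT: "t \<in> T" using fin False by (simp add: t_def)
  have "T = {1..t}"
  proof
    show "T \<subseteq> {1..t}" using assms(1) fin by (auto simp: t_def)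
    show "{1..t} \<subseteq> T" using assms(2)[OF tT] by auto
  qed
  then show ?thesis by simp
qed

lemma init_seg_iff:
  assumes "T \<subseteq> {1..K::nat}" and "\<And>s s'. s \<in> T \<Longrightarrow> 1 \<le> s' \<Longrightarrow> s' \<le> s \<Longrightarrow> s' \<in> T"
    and "1 \<le> s"
  shows "s \<in> T \<longleftrightarrow> s \<le> card T"
proof -
  have "\<exists>t. T = {1..t}" using init_seg[of T K] assms(1,2) by blast
  then obtain t where "T = {1..t}" by blast
  then show ?thesis using assms(3) by simp
qed

definition path_ok :: "nat \<Rightarrow> nat \<Rightarrow> (nat \<Rightarrow> nat) \<Rightarrow> bool" where
  "path_ok K m \<sigma> \<longleftrightarrow> \<sigma> 0 = 0 \<and> \<sigma> (K + m) = K \<and>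
     (\<forall>j < K + m. \<sigma> (Suc j) = \<sigma> j \<or> \<sigma> (Suc j) = Suc (\<sigma> j))"

definition Pf :: "nat \<Rightarrow> (nat \<Rightarrow> nat) \<Rightarrow> nat \<Rightarrow> nat" where
  "Pf K \<sigma> v = card {s \<in> {1..K}. s \<le> \<sigma> (s + v - 1)}"

definition recon :: "nat \<Rightarrow> nat \<Rightarrow> (nat \<Rightarrow> nat) \<Rightarrow> nat \<Rightarrow> nat" where
  "recon K m Q j = card {s \<in> {1..K}. s \<le> j \<and> (m < j + 1 - s \<or> s \<le> Q (j + 1 - s))}"

context
  fixes K m :: nat and \<sigma> :: "nat \<Rightarrow> nat"
  assumes ok: "path_ok K m \<sigma>"
begin

lemma path_step: "j < K + m \<Longrightarrow> \<sigma> (Suc j) = \<sigma> j \<or> \<sigma> (Suc j) = Suc (\<sigma> j)"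
  using ok by (simp add: path_ok_def)

lemma path_lip: "j' \<le> j \<Longrightarrow> j \<le> K + m \<Longrightarrow> \<sigma> j' \<le> \<sigma> j \<and> \<sigma> j \<le> \<sigma> j' + (j - j')"
proof (induction j)
  case 0 then show ?case by simp
next
  case (Suc j)
  show ?case
  proof (cases "j' = Suc j")
    case True then show ?thesis by simp
  next
    case False
    then have "j' \<le> j" using Suc.prems by simp
    then show ?thesis using Suc.IH Suc.prems path_step[of j] by auto
  qed
qed

lemma path_le: "j \<le> K + m \<Longrightarrow> \<sigma> j \<le> j"
  using path_lip[of 0 j] ok by (simp add: path_ok_def)

lemma path_leK: "j \<le> K + m \<Longrightarrow> \<sigma> j \<le> K"
  using path_lip[of j "K + m"] ok by (simp add: path_ok_def)

lemma path_geb: "j \<le> K + m \<Longrightarrow> j \<le> \<sigma> j + m"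
proof -
  assume j: "j \<le> K + m"
  have "\<sigma> (K + m) \<le> \<sigma> j + (K + m - j)" using path_lip[of j "K + m"] j by simp
  moreover have "\<sigma> (K + m) = K" using ok by (simp add: path_ok_def)
  ultimately show ?thesis using j by arith
qed

lemma Pf_iff:
  assumes "1 \<le> v" "v \<le> m" "1 \<le> s" "s \<le> K"
  shows "s \<le> Pf K \<sigma> v \<longleftrightarrow> s \<le> \<sigma> (s + v - 1)"
proof -
  let ?T = "{s \<in> {1..K}. s \<le> \<sigma> (s + v - 1)}"
  have dc: "s' \<in> ?T" if "s \<in> ?T" "1 \<le> s'" "s' \<le> s" for s s'
  proof -
    have "\<sigma> (s + v - 1) \<le> \<sigma> (s' + v - 1) + (s - s')"
      using path_lip[of "s' + v - 1" "s + v - 1"] that assms by auto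
    then show ?thesis using that by auto
  qed
  have "s \<in> ?T \<longleftrightarrow> s \<le> card ?T"
    by (rule init_seg_iff[where K=K]) (use dc assms in auto)
  then show ?thesis using assms by (auto simp: Pf_def)
qed

lemma Pf_leK: "Pf K \<sigma> v \<le> K"
proof -
  have "Pf K \<sigma> v \<le> card {1..K}" unfolding Pf_def by (rule card_mono) auto
  then show ?thesis by simp
qed

lemma Pf_0: "Pf K \<sigma> 0 = 0"
proof -
  have "{s \<in> {1..K}. s \<le> \<sigma> (s + 0 - 1)} = {}"
  proof -
    have "\<not> s \<le> \<sigma> (s - 1)" if "1 \<le> s" "s \<le> K" for s
    proof -
      have "s - 1 \<le> K + m" using that by simp
      then show ?thesis using path_le[of "s - 1"] that by auto
    qed
    then show ?thesis by auto
  qed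
  then show ?thesis by (simp add: Pf_def)
qed

lemma Pf_mono:
  assumes "1 \<le> v" "v \<le> v'" "v' \<le> m"
  shows "Pf K \<sigma> v \<le> Pf K \<sigma> v'"
  unfolding Pf_def
proof (rule card_mono)
  show "{s \<in> {1..K}. s \<le> \<sigma> (s + v - 1)} \<subseteq> {s \<in> {1..K}. s \<le> \<sigma> (s + v' - 1)}"
    using assms path_lip by (auto intro: order_trans)
qed simp

lemma path_recon:
  assumes "j \<le> K + m"
  shows "\<sigma> j = recon K m (Pf K \<sigma>) j"
proof -
  let ?T = "{s \<in> {1..K}. s \<le> j \<and> (m < j + 1 - s \<or> s \<le> Pf K \<sigma> (j + 1 - s))}"
  have "?T = {1..\<sigma> j}"
  proof (intro Set.set_eqI iffI)
    fix s assume s: "s \<in> ?T"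
    show "s \<in> {1..\<sigma> j}"
    proof (cases "m < j + 1 - s")
      case True
      then show ?thesis using s path_geb[OF assms] by auto
    next
      case False
      then have "s \<le> Pf K \<sigma> (j + 1 - s)" using s by auto
      then have "s \<le> \<sigma> (s + (j + 1 - s) - 1)"
        using Pf_iff[of "j + 1 - s" s] s False by auto
      then show ?thesis using s by auto
    qed
  next
    fix s assume s: "s \<in> {1..\<sigma> j}"
    have sK: "s \<le> K" using s path_leK[OF assms] by auto
    have sj: "s \<le> j" using s path_le[OF assms] by auto
    have "m < j + 1 - s \<or> s \<le> Pf K \<sigma> (j + 1 - s)"
    proof (cases "m < j + 1 - s")
      case False
      then show ?thesis using Pf_iff[of "j + 1 - s" s] s sK sj by auto
    qed simp
    then show "s \<in> ?T" using s sK sj by auto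
  qed
  then show ?thesis by (simp add: recon_def)
qed

end

lemma Pf_inj:
  assumes "path_ok K m \<sigma>" "path_ok K m \<tau>" "\<And>v. 1 \<le> v \<Longrightarrow> v \<le> m \<Longrightarrow> Pf K \<sigma> v = Pf K \<tau> v"
    and "j \<le> K + m"
  shows "\<sigma> j = \<tau> j"
proof -
  have "recon K m (Pf K \<sigma>) j = recon K m (Pf K \<tau>) j"
    unfolding recon_def
  proof (intro arg_cong[where f=card] Collect_cong)
    fix s
    show "(s \<in> {1..K} \<and> s \<le> j \<and> (m < j + 1 - s \<or> s \<le> Pf K \<sigma> (j + 1 - s))) =
          (s \<in> {1..K} \<and> s \<le> j \<and> (m < j + 1 - s \<or> s \<le> Pf K \<tau> (j + 1 - s)))"
    proof (cases "s \<le> j \<and> \<not> m < j + 1 - s")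
      case True
      then have "Pf K \<sigma> (j + 1 - s) = Pf K \<tau> (j + 1 - s)" by (intro assms(3)) auto
      then show ?thesis by simp
    qed auto
  qed
  then show ?thesis using path_recon[OF assms(1,4)] path_recon[OF assms(2,4)] by simp
qed

context
  fixes K m :: nat and Q :: "nat \<Rightarrow> nat"
  assumes Qmono: "\<And>v v'. 1 \<le> v \<Longrightarrow> v \<le> v' \<Longrightarrow> v' \<le> m \<Longrightarrow> Q v \<le> Q v'"
    and QK: "\<And>v. 1 \<le> v \<Longrightarrow> v \<le> m \<Longrightarrow> Q v \<le> K"
begin

definition RS :: "nat \<Rightarrow> nat set" where
  "RS j = {s \<in> {1..K}. s \<le> j \<and> (m < j + 1 - s \<or> s \<le> Q (j + 1 - s))}"

lemma RS_dc: "s \<in> RS j \<Longrightarrow> 1 \<le> s' \<Longrightarrow> s' \<le> s \<Longrightarrow> s' \<in> RS j"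
proof -
  assume s: "s \<in> RS j" and s': "1 \<le> s'" "s' \<le> s"
  have "m < j + 1 - s' \<or> s' \<le> Q (j + 1 - s')"
  proof (cases "m < j + 1 - s'")
    case False
    then have "\<not> m < j + 1 - s" using s' by auto
    then have "s \<le> Q (j + 1 - s)" using s by (auto simp: RS_def)
    moreover have "Q (j + 1 - s) \<le> Q (j + 1 - s')"
      using Qmono[of "j + 1 - s" "j + 1 - s'"] s s' False by (auto simp: RS_def)
    ultimately show ?thesis using s' by auto
  qed simp
  then show "s' \<in> RS j" using s s' by (auto simp: RS_def)
qed

lemma RS_iff: "1 \<le> s \<Longrightarrow> s \<in> RS j \<longleftrightarrow> s \<le> card (RS j)"
  by (rule init_seg_iff[where K=K, OF _ RS_dc]) (auto simp: RS_def)

lemma recon_RS: "recon K m Q j = card (RS j)" by (simp add: recon_def RS_def)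

lemma recon_ok: "path_ok K m (recon K m Q)"
  unfolding path_ok_def
proof (intro conjI allI impI)
  show "recon K m Q 0 = 0" by (simp add: recon_def)
  have "{s \<in> {1..K}. s \<le> K + m \<and> (m < K + m + 1 - s \<or> s \<le> Q (K + m + 1 - s))} = {1..K}"
    by auto
  then show "recon K m Q (K + m) = K" by (simp add: recon_def)
  fix j assume "j < K + m"
  have sub: "RS j \<subseteq> RS (Suc j)"
  proof
    fix s assume s: "s \<in> RS j"
    have "m < Suc j + 1 - s \<or> s \<le> Q (Suc j + 1 - s)"
    proof (cases "m < Suc j + 1 - s")
      case False
      then have "\<not> m < j + 1 - s" by auto
      then have "s \<le> Q (j + 1 - s)" using s by (auto simp: RS_def)
      moreover have "Q (j + 1 - s) \<le> Q (Suc j + 1 - s)"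
        using Qmono[of "j + 1 - s" "Suc j + 1 - s"] s False by (auto simp: RS_def)
      ultimately show ?thesis by auto
    qed simp
    then show "s \<in> RS (Suc j)" using s by (auto simp: RS_def)
  qed
  have le1: "card (RS (Suc j)) \<le> Suc (card (RS j))"
  proof (rule ccontr)
    assume "\<not> ?thesis"
    then have c: "Suc (Suc (card (RS j))) \<le> card (RS (Suc j))" by simp
    then have "Suc (Suc (card (RS j))) \<in> RS (Suc j)" using RS_iff by simp
    then have "Suc (card (RS j)) \<in> RS j"
      by (auto simp: RS_def)
    then show False using RS_iff[of "Suc (card (RS j))" j] by simp
  qed
  have "card (RS j) \<le> card (RS (Suc j))"
    by (rule card_mono[OF _ sub]) (simp add: RS_def)
  then show "recon K m Q (Suc j) = recon K m Q j \<or> recon K m Q (Suc j) = Suc (recon K m Q j)"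
    using le1 by (auto simp: recon_RS)
qed

lemma Pf_recon:
  assumes "1 \<le> v" "v \<le> m"
  shows "Pf K (recon K m Q) v = Q v"
proof -
  have "{s \<in> {1..K}. s \<le> recon K m Q (s + v - 1)} = {1..Q v}"
  proof (intro Set.set_eqI iffI)
    fix s assume s: "s \<in> {s \<in> {1..K}. s \<le> recon K m Q (s + v - 1)}"
    then have "s \<in> RS (s + v - 1)" using RS_iff[of s] by (auto simp: recon_RS)
    then show "s \<in> {1..Q v}" using assms by (auto simp: RS_def)
  next
    fix s assume s: "s \<in> {1..Q v}"
    then have "s \<in> RS (s + v - 1)" using assms QK[of v] by (auto simp: RS_def)
    then show "s \<in> {s \<in> {1..K}. s \<le> recon K m Q (s + v - 1)}"
      using RS_iff[of s] s assms QK[of v] by (auto simp: recon_RS)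
  qed
  then show ?thesis by (simp add: Pf_def)
qed

end


definition Fam :: "nat \<Rightarrow> nat \<Rightarrow> nat \<Rightarrow> (nat \<Rightarrow> nat \<Rightarrow> nat) set" where
  "Fam N K m = {\<sigma>. (\<forall>k j. (N \<le> k \<or> K + m < j) \<longrightarrow> \<sigma> k j = 0) \<and> (\<forall>k<N. path_ok K m (\<sigma> k)) \<and>
      (\<forall>k j. Suc k < N \<longrightarrow> 1 \<le> j \<longrightarrow> j \<le> K + m \<longrightarrow> \<sigma> k j \<le> \<sigma> (Suc k) (j - 1))}"

lemma pair_iff:
  assumes s: "path_ok K m \<sigma>" and t: "path_ok K m \<tau>" and m: "1 \<le> m"
  shows "(\<forall>j. 1 \<le> j \<longrightarrow> j \<le> K + m \<longrightarrow> \<sigma> j \<le> \<tau> (j - 1)) \<longleftrightarrow>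
         (\<forall>v. 1 \<le> v \<longrightarrow> v \<le> m \<longrightarrow> Pf K \<sigma> v \<le> Pf K \<tau> (v - 1)) \<and> K \<le> Pf K \<tau> m"
proof
  assume H: "\<forall>j. 1 \<le> j \<longrightarrow> j \<le> K + m \<longrightarrow> \<sigma> j \<le> \<tau> (j - 1)"
  show "(\<forall>v. 1 \<le> v \<longrightarrow> v \<le> m \<longrightarrow> Pf K \<sigma> v \<le> Pf K \<tau> (v - 1)) \<and> K \<le> Pf K \<tau> m"
  proof (intro conjI allI impI)
    fix v assume v: "1 \<le> v" "v \<le> m"
    define s where "s = Pf K \<sigma> v"
    show "Pf K \<sigma> v \<le> Pf K \<tau> (v - 1)"
    proof (cases "s = 0")
      case False
      have sK: "s \<le> K" using Pf_leK[OF s] by (simp add: s_def)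
      have "s \<le> \<sigma> (s + v - 1)" using Pf_iff[OF s v, of s] False sK by (simp add: s_def)
      also have "\<dots> \<le> \<tau> (s + v - 1 - 1)" by (rule H[rule_format]) (use v False sK in auto)
      finally have st: "s \<le> \<tau> (s + v - 1 - 1)" .
      show ?thesis
      proof (cases "v = 1")
        case True
        then have "\<tau> (s + v - 1 - 1) \<le> s - 1" using path_le[OF t, of "s - 1"] sK False by auto
        then show ?thesis using st False by simp
      next
        case False
        have "s \<le> Pf K \<tau> (v - 1)"
          using Pf_iff[OF t, of "v - 1" s] False v \<open>s \<noteq> 0\<close> sK st by auto
        then show ?thesis by (simp add: s_def)
      qed
    qed (simp add: s_def)
  next
    show "K \<le> Pf K \<tau> m"
    proof (cases "K = 0")
      case False
      have "K = \<sigma> (K + m)" using s by (simp add: path_ok_def)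
      also have "\<dots> \<le> \<tau> (K + m - 1)" using H m by auto
      finally have "K \<le> \<tau> (K + m - 1)" .
      then show ?thesis using Pf_iff[OF t, of m K] m False by auto
    qed simp
  qed
next
  assume H: "(\<forall>v. 1 \<le> v \<longrightarrow> v \<le> m \<longrightarrow> Pf K \<sigma> v \<le> Pf K \<tau> (v - 1)) \<and> K \<le> Pf K \<tau> m"
  show "\<forall>j. 1 \<le> j \<longrightarrow> j \<le> K + m \<longrightarrow> \<sigma> j \<le> \<tau> (j - 1)"
  proof (intro allI impI)
    fix j assume j: "1 \<le> j" "j \<le> K + m"
    define s where "s = \<sigma> j"
    show "\<sigma> j \<le> \<tau> (j - 1)"
    proof (cases "s = 0")
      case False
      have sj: "s \<le> j" using path_le[OF s j(2)] by (simp add: s_def)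
      have sK: "s \<le> K" using path_leK[OF s j(2)] by (simp add: s_def)
      have jb: "j \<le> s + m" using path_geb[OF s j(2)] by (simp add: s_def)
      show ?thesis
      proof (cases "j + 1 - s \<le> m")
        case True
        have "s \<le> Pf K \<sigma> (j + 1 - s)"
          using Pf_iff[OF s, of "j + 1 - s" s] True sj sK False by (simp add: s_def)
        also have "\<dots> \<le> Pf K \<tau> (j + 1 - s - 1)" by (rule H[THEN conjunct1, rule_format]) (use True sj in auto)
        finally have st: "s \<le> Pf K \<tau> (j - s)" using sj by simp
        show ?thesis
        proof (cases "j = s")
          case True
          then show ?thesis using st False by (simp add: Pf_0[OF t])
        next
          case False
          then have "s \<le> \<tau> (s + (j - s) - 1)"
            using Pf_iff[OF t, of "j - s" s] st sj sK \<open>s \<noteq> 0\<close> True by auto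
          then show ?thesis using sj by (simp add: s_def)
        qed
      next
        case False
        then have jm: "j = s + m" using jb by simp
        have "s \<le> Pf K \<tau> m" using H sK by auto
        then have "s \<le> \<tau> (s + m - 1)" using Pf_iff[OF t, of m s] m sK \<open>s \<noteq> 0\<close> by auto
        moreover have "j - 1 = s + m - 1" using jm by simp
        moreover have "\<sigma> j = s" unfolding s_def ..
        ultimately show ?thesis by (simp only:)
      qed
    qed (simp add: s_def)
  qed
qed

definition lev :: "nat \<Rightarrow> nat \<Rightarrow> (nat \<Rightarrow> nat \<Rightarrow> nat) \<Rightarrow> nat \<Rightarrow> nat \<Rightarrow> nat" where
  "lev N K \<sigma> v = restrict (\<lambda>i. Suc i + Pf K (\<sigma> i) v) {0..<N}"

definition xtop :: "nat \<Rightarrow> nat \<Rightarrow> nat \<Rightarrow> nat \<Rightarrow> nat" where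
  "xtop N K n = restrict (\<lambda>i. if i = 0 then n else Suc i + K) {0..<N}"

definition Phi :: "nat \<Rightarrow> nat \<Rightarrow> nat \<Rightarrow> (nat \<Rightarrow> nat \<Rightarrow> nat) \<Rightarrow> (nat \<Rightarrow> nat) list" where
  "Phi N K m \<sigma> = rev (map (lev N K \<sigma>) [0..<m])"

definition Famn :: "nat \<Rightarrow> nat \<Rightarrow> nat \<Rightarrow> nat \<Rightarrow> (nat \<Rightarrow> nat \<Rightarrow> nat) set" where
  "Famn N K m n = {\<sigma> \<in> Fam N K m. Pf K (\<sigma> 0) m = n - 1}"

lemma box_iff: "y \<in> box N x \<longleftrightarrow> y \<in> extensional {0..<N} \<and> (\<forall>i<N. lo x i < y i \<and> y i \<le> x i)"
  by (auto simp: box_def PiE_def)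

lemma Phi_nth: "t < m \<Longrightarrow> Phi N K m \<sigma> ! t = lev N K \<sigma> (m - 1 - t)"
  by (simp add: Phi_def rev_nth)

lemma length_Phi[simp]: "length (Phi N K m \<sigma>) = m" by (simp add: Phi_def)

context
  fixes N K m :: nat
  assumes m1: "1 \<le> m"
begin

lemma Fam_facts:
  assumes \<sigma>: "\<sigma> \<in> Fam N K m"
  shows "\<And>i. i < N \<Longrightarrow> path_ok K m (\<sigma> i)"
    and "\<And>i v. Suc i < N \<Longrightarrow> 1 \<le> v \<Longrightarrow> v \<le> m \<Longrightarrow> Pf K (\<sigma> i) v \<le> Pf K (\<sigma> (Suc i)) (v - 1)"
    and "\<And>i. 1 \<le> i \<Longrightarrow> i < N \<Longrightarrow> Pf K (\<sigma> i) m = K"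
proof -
  show ok: "\<And>i. i < N \<Longrightarrow> path_ok K m (\<sigma> i)" using \<sigma> by (simp add: Fam_def)
  have pr: "(\<forall>v. 1 \<le> v \<longrightarrow> v \<le> m \<longrightarrow> Pf K (\<sigma> i) v \<le> Pf K (\<sigma> (Suc i)) (v - 1)) \<and> K \<le> Pf K (\<sigma> (Suc i)) m"
    if "Suc i < N" for i
  proof -
    have "\<forall>j. 1 \<le> j \<longrightarrow> j \<le> K + m \<longrightarrow> \<sigma> i j \<le> \<sigma> (Suc i) (j - 1)"
      using \<sigma> that by (simp add: Fam_def)
    then show ?thesis using pair_iff[OF ok ok m1, of i "Suc i"] that by simp
  qed
  show "\<And>i v. Suc i < N \<Longrightarrow> 1 \<le> v \<Longrightarrow> v \<le> m \<Longrightarrow> Pf K (\<sigma> i) v \<le> Pf K (\<sigma> (Suc i)) (v - 1)"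
    using pr by blast
  show "\<And>i. 1 \<le> i \<Longrightarrow> i < N \<Longrightarrow> Pf K (\<sigma> i) m = K"
  proof -
    fix i assume i: "1 \<le> i" "i < N"
    then have "K \<le> Pf K (\<sigma> i) m" using pr[of "i - 1"] by simp
    then show "Pf K (\<sigma> i) m = K" using Pf_leK[OF ok[OF i(2)]] by (intro antisym)
  qed
qed

lemma Phi_in_CH:
  assumes \<sigma>: "\<sigma> \<in> Famn N K m n" and n: "1 \<le> n"
  shows "Phi N K m \<sigma> \<in> CH N m (xtop N K n)"
proof -
  have F: "\<sigma> \<in> Fam N K m" and c: "Pf K (\<sigma> 0) m = n - 1" using \<sigma> by (auto simp: Famn_def)
  note ok = Fam_facts(1)[OF F] and pr = Fam_facts(2)[OF F] and top = Fam_facts(3)[OF F]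
  let ?P = "\<lambda>i v. Pf K (\<sigma> i) v"
  have P0: "?P i 0 = 0" if "i < N" for i using Pf_0[OF ok[OF that]] .
  have Pm: "?P i (v - 1) \<le> ?P i v" if "i < N" "1 \<le> v" "v \<le> m" for i v
  proof (cases "v = 1")
    case True then show ?thesis using P0[OF that(1)] by simp
  next
    case False then show ?thesis using Pf_mono[OF ok[OF that(1)], of "v - 1" v] that by simp
  qed
  have PK: "?P i v \<le> K" if "i < N" for i v using Pf_leK[OF ok[OF that]] .
  define Lv where "Lv v = (if v = m then xtop N K n else lev N K \<sigma> v)" for v
  have boxL: "lev N K \<sigma> (v - 1) \<in> box N (Lv v)" if v: "1 \<le> v" "v \<le> m" for v
    unfolding box_iff
  proof (intro conjI allI impI)
    show "lev N K \<sigma> (v - 1) \<in> extensional {0..<N}" by (simp add: lev_def)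
    fix i assume i: "i < N"
    show "lev N K \<sigma> (v - 1) i \<le> Lv v i"
    proof (cases "v = m")
      case True
      show ?thesis
      proof (cases "i = 0")
        case True
        then show ?thesis using \<open>v = m\<close> Pm[OF i v] c n i by (simp add: Lv_def lev_def xtop_def)
      next
        case False
        then show ?thesis using \<open>v = m\<close> PK[OF i] i by (simp add: Lv_def lev_def xtop_def)
      qed
    next
      case False
      then show ?thesis using Pm[OF i v] i by (simp add: Lv_def lev_def)
    qed
    show "lo (Lv v) i < lev N K \<sigma> (v - 1) i"
    proof (cases i)
      case 0
      then show ?thesis using i by (simp add: lo_def lev_def)
    next
      case (Suc i')
      have pi: "?P i' v \<le> ?P i (v - 1)" using pr[of i' v] Suc i v by simp
      show ?thesis
      proof (cases "v = m")
        case True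
        show ?thesis
        proof (cases "i' = 0")
          case True
          then show ?thesis using \<open>v = m\<close> pi c n i Suc by (simp add: lo_def Lv_def lev_def xtop_def)
        next
          case False
          then have "?P i' m = K" using top[of i'] Suc i by simp
          then show ?thesis using \<open>v = m\<close> pi False i Suc by (simp add: lo_def Lv_def lev_def xtop_def)
        qed
      next
        case False
        then show ?thesis using pi i Suc by (simp add: lo_def Lv_def lev_def)
      qed
    qed
  qed
  show ?thesis
    unfolding CH_char
  proof (intro conjI allI impI)
    show "length (Phi N K m \<sigma>) = m" by simp
    fix t assume t: "t < m"
    have "Phi N K m \<sigma> ! t = lev N K \<sigma> (m - t - 1)" using Phi_nth[OF t] by simp
    moreover have "(if t = 0 then xtop N K n else Phi N K m \<sigma> ! (t - 1)) = Lv (m - t)"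
      using t by (auto simp: Lv_def Phi_nth)
    ultimately show "Phi N K m \<sigma> ! t \<in> box N (if t = 0 then xtop N K n else Phi N K m \<sigma> ! (t - 1))"
      using boxL[of "m - t"] t by simp
  next
    have "Phi N K m \<sigma> ! (m - 1) = lev N K \<sigma> 0" using Phi_nth[of "m - 1" m] m1 by simp
    also have "\<dots> = delta N" by (auto simp: lev_def delta_def P0 fun_eq_iff)
    finally show "if m = 0 then xtop N K n = delta N else Phi N K m \<sigma> ! (m - 1) = delta N"
      using m1 by simp
  qed
qed

lemma Phi_inj:
  assumes \<sigma>: "\<sigma> \<in> Famn N K m n" and \<tau>: "\<tau> \<in> Famn N K m n" and eq: "Phi N K m \<sigma> = Phi N K m \<tau>"
  shows "\<sigma> = \<tau>"
proof -
  have F1: "\<sigma> \<in> Fam N K m" and c1: "Pf K (\<sigma> 0) m = n - 1" using \<sigma> by (auto simp: Famn_def)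
  have F2: "\<tau> \<in> Fam N K m" and c2: "Pf K (\<tau> 0) m = n - 1" using \<tau> by (auto simp: Famn_def)
  have levs: "lev N K \<sigma> v = lev N K \<tau> v" if "v < m" for v
  proof -
    have "m - 1 - v < m" using that by simp
    then have "Phi N K m \<sigma> ! (m - 1 - v) = Phi N K m \<tau> ! (m - 1 - v)" using eq by simp
    then show ?thesis using Phi_nth[of "m - 1 - v" m] that by simp
  qed
  have PP: "Pf K (\<sigma> i) v = Pf K (\<tau> i) v" if i: "i < N" and v: "1 \<le> v" "v \<le> m" for i v
  proof (cases "v = m")
    case True
    then show ?thesis
    proof (cases "i = 0")
      case True then show ?thesis using c1 c2 \<open>v = m\<close> by simp
    next
      case False then show ?thesis using Fam_facts(3)[OF F1, of i] Fam_facts(3)[OF F2, of i] i \<open>v = m\<close> by simp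
    qed
  next
    case False
    then have "lev N K \<sigma> v i = lev N K \<tau> v i" using levs[of v] v by simp
    then show ?thesis using i by (simp add: lev_def)
  qed
  show ?thesis
  proof (intro ext)
    fix i j
    show "\<sigma> i j = \<tau> i j"
    proof (cases "i < N \<and> j \<le> K + m")
      case True
      then show ?thesis
        using Pf_inj[OF Fam_facts(1)[OF F1] Fam_facts(1)[OF F2], of i i] PP by auto
    next
      case False
      then show ?thesis using F1 F2 by (auto simp: Fam_def not_le)
    qed
  qed
qed


lemma Phi_surj:
  assumes ys: "ys \<in> CH N m (xtop N K n)" and n: "1 \<le> n" "n \<le> Suc K" and N1: "0 < N"
  shows "\<exists>\<sigma>\<in>Famn N K m n. Phi N K m \<sigma> = ys"
proof -
  define Lv where "Lv v = (if v = m then xtop N K n else ys ! (m - 1 - v))" for v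
  have len: "length ys = m" using ys by (simp add: CH_char)
  have allb: "\<forall>t<m. ys ! t \<in> box N (if t = 0 then xtop N K n else ys ! (t - 1))"
    using ys unfolding CH_char by blast
  have C1: "Lv (v - 1) \<in> box N (Lv v)" if "1 \<le> v" "v \<le> m" for v
  proof -
    have "ys ! (m - v) \<in> box N (if m - v = 0 then xtop N K n else ys ! (m - v - 1))"
      using allb[rule_format, of "m - v"] that by simp
    moreover have "Lv (v - 1) = ys ! (m - v)" using that by (auto simp: Lv_def)
    moreover have "(if m - v = 0 then xtop N K n else ys ! (m - v - 1)) = Lv v"
      using that by (auto simp: Lv_def)
    ultimately show ?thesis by simp
  qed
  have C2: "Lv 0 = delta N" using ys m1 unfolding CH_char by (simp add: Lv_def)
  have extL: "Lv v \<in> extensional {0..<N}" if "v \<le> m" for v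
  proof (cases "v = m")
    case True then show ?thesis by (simp add: Lv_def xtop_def)
  next
    case False then show ?thesis using C1[of "Suc v"] that by (simp add: box_iff)
  qed
  have good: "\<forall>i<N. Suc i \<le> Lv (m - d) i \<and> Lv (m - d) i \<le> Suc i + K" if "d \<le> m" for d
    using that
  proof (induction d)
    case 0
    then show ?case using n by (auto simp: Lv_def xtop_def)
  next
    case (Suc d)
    have IH: "\<forall>i<N. Suc i \<le> Lv (m - d) i \<and> Lv (m - d) i \<le> Suc i + K" using Suc by simp
    have b: "Lv (m - d - 1) \<in> box N (Lv (m - d))" using C1[of "m - d"] Suc.prems by simp
    show ?case
    proof (intro allI impI conjI)
      fix i assume i: "i < N"
      have bi: "lo (Lv (m - d)) i < Lv (m - Suc d) i \<and> Lv (m - Suc d) i \<le> Lv (m - d) i"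
        using b i unfolding box_iff by simp
      show "Lv (m - Suc d) i \<le> Suc i + K" using bi IH i by force
      show "Suc i \<le> Lv (m - Suc d) i"
      proof (cases i)
        case 0 then show ?thesis using bi by (simp add: lo_def)
      next
        case (Suc i')
        have "Suc i' \<le> Lv (m - d) i'" using IH i Suc by auto
        then show ?thesis using bi Suc by (simp add: lo_def)
      qed
    qed
  qed
  have good': "Suc i \<le> Lv v i \<and> Lv v i \<le> Suc i + K" if "v \<le> m" "i < N" for v i
    using good[of "m - v"] that by simp
  define Q where "Q i v = Lv v i - Suc i" for i v
  have LQ: "Lv v i = Suc i + Q i v" if "v \<le> m" "i < N" for v i
    using good'[OF that] by (simp add: Q_def)
  have Q1: "Q i (v - 1) \<le> Q i v" if "i < N" "1 \<le> v" "v \<le> m" for i v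
  proof -
    have "Lv (v - 1) i \<le> Lv v i" using C1[of v] that unfolding box_iff by simp
    then show ?thesis by (simp add: Q_def)
  qed
  have Qmono: "Q i v \<le> Q i v'" if "i < N" "v \<le> v'" "v' \<le> m" for i v v'
  proof -
    have "v' \<le> m \<longrightarrow> Q i v \<le> Q i v'"
      using that(2)
    proof (induction v' rule: dec_induct)
      case base then show ?case by simp
    next
      case (step k) then show ?case using Q1[of i "Suc k"] that(1) by auto
    qed
    then show ?thesis using that by simp
  qed
  have QK: "Q i v \<le> K" if "i < N" "v \<le> m" for i v using good'[OF that(2,1)] unfolding Q_def by arith
  have Q0: "Q i 0 = 0" if "i < N" for i using C2 that by (simp add: Q_def delta_def)
  have Q4: "Q i v \<le> Q (Suc i) (v - 1)" if "Suc i < N" "1 \<le> v" "v \<le> m" for i v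
  proof -
    have "lo (Lv v) (Suc i) < Lv (v - 1) (Suc i)" using C1[of v] that unfolding box_iff by simp
    then have "Lv v i < Lv (v - 1) (Suc i)" by (simp add: lo_def)
    then show ?thesis using LQ[of v i] LQ[of "v - 1" "Suc i"] that by simp
  qed
  have Q5: "Q 0 m = n - 1" using m1 N1 by (simp add: Q_def Lv_def xtop_def)
  have Q6: "Q i m = K" if "1 \<le> i" "i < N" for i using that by (simp add: Q_def Lv_def xtop_def)
  define \<sigma> where "\<sigma> i j = (if i < N \<and> j \<le> K + m then recon K m (Q i) j else 0)" for i j
  have rok: "path_ok K m (recon K m (Q i))" if "i < N" for i
    by (rule recon_ok) (use Qmono QK that in auto)
  have ok: "path_ok K m (\<sigma> i)" if "i < N" for i
    using rok[OF that] that unfolding path_ok_def by (auto simp: \<sigma>_def)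
  have PfQ: "Pf K (\<sigma> i) v = Q i v" if "i < N" "1 \<le> v" "v \<le> m" for i v
  proof -
    have "Pf K (\<sigma> i) v = Pf K (recon K m (Q i)) v"
      unfolding Pf_def using that by (intro arg_cong[where f=card] Collect_cong) (auto simp: \<sigma>_def)
    also have "\<dots> = Q i v" by (rule Pf_recon) (use Qmono QK that in auto)
    finally show ?thesis .
  qed
  have PfQ0: "Pf K (\<sigma> i) v = Q i v" if "i < N" "v < m" for i v
  proof (cases "v = 0")
    case True then show ?thesis using Pf_0[OF ok[OF that(1)]] Q0[OF that(1)] by simp
  next
    case False then show ?thesis using PfQ[OF that(1)] that by simp
  qed
  have F: "\<sigma> \<in> Fam N K m"
    unfolding Fam_def
  proof (intro CollectI conjI allI impI)
    fix k j assume "N \<le> k \<or> K + m < j" then show "\<sigma> k j = 0" by (auto simp: \<sigma>_def)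
  next
    fix k assume "k < N" then show "path_ok K m (\<sigma> k)" by (rule ok)
  next
    fix k j assume k: "Suc k < N" and j: "1 \<le> j" "j \<le> K + m"
    have "(\<forall>v. 1 \<le> v \<longrightarrow> v \<le> m \<longrightarrow> Pf K (\<sigma> k) v \<le> Pf K (\<sigma> (Suc k)) (v - 1)) \<and> K \<le> Pf K (\<sigma> (Suc k)) m"
    proof (intro conjI allI impI)
      fix v assume v: "1 \<le> v" "v \<le> m"
      have "Pf K (\<sigma> k) v = Q k v" using PfQ[of k v] k v by simp
      also have "\<dots> \<le> Q (Suc k) (v - 1)" using Q4[OF k v] .
      also have "\<dots> = Pf K (\<sigma> (Suc k)) (v - 1)" using PfQ0[of "Suc k" "v - 1"] k v by simp
      finally show "Pf K (\<sigma> k) v \<le> Pf K (\<sigma> (Suc k)) (v - 1)" .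
    next
      show "K \<le> Pf K (\<sigma> (Suc k)) m" using PfQ[of "Suc k" m] Q6[of "Suc k"] k m1 by simp
    qed
    then have "\<forall>j. 1 \<le> j \<longrightarrow> j \<le> K + m \<longrightarrow> \<sigma> k j \<le> \<sigma> (Suc k) (j - 1)"
      using pair_iff[OF ok ok m1, of k "Suc k"] k by simp
    then show "\<sigma> k j \<le> \<sigma> (Suc k) (j - 1)" using j by simp
  qed
  have Fn: "\<sigma> \<in> Famn N K m n"
    using F PfQ[of 0 m] Q5 m1 N1 by (simp add: Famn_def)
  have "Phi N K m \<sigma> = ys"
  proof (rule nth_equalityI)
    show "length (Phi N K m \<sigma>) = length ys" using len by simp
    fix t assume t: "t < length (Phi N K m \<sigma>)"
    then have t: "t < m" by simp
    have "Phi N K m \<sigma> ! t = lev N K \<sigma> (m - 1 - t)" by (rule Phi_nth[OF t])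
    also have "\<dots> = Lv (m - 1 - t)"
    proof (rule ext)
      fix i
      show "lev N K \<sigma> (m - 1 - t) i = Lv (m - 1 - t) i"
      proof (cases "i < N")
        case True
        then show ?thesis using PfQ0[of i "m - 1 - t"] LQ[of "m - 1 - t" i] t by (simp add: lev_def)
      next
        case False
        then show ?thesis using extL[of "m - 1 - t"] t by (simp add: lev_def extensional_def)
      qed
    qed
    also have "\<dots> = ys ! t" using t by (auto simp: Lv_def)
    finally show "Phi N K m \<sigma> ! t = ys ! t" .
  qed
  then show ?thesis using Fn by blast
qed

lemma card_Famn:
  assumes n: "1 \<le> n" "n \<le> Suc K" and N1: "0 < N"
  shows "card (Famn N K m n) = card (CH N m (xtop N K n))"
proof (rule bij_betw_same_card[of "Phi N K m"])
  show "bij_betw (Phi N K m) (Famn N K m n) (CH N m (xtop N K n))"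
    unfolding bij_betw_def
  proof
    show "inj_on (Phi N K m) (Famn N K m n)" by (intro inj_onI) (rule Phi_inj)
    show "Phi N K m ` Famn N K m n = CH N m (xtop N K n)"
      using Phi_in_CH[OF _ n(1)] Phi_surj[OF _ n N1] by blast
  qed
qed

end


definition cfgv :: "nat \<Rightarrow> nat \<Rightarrow> nat \<Rightarrow> (nat \<Rightarrow> nat \<Rightarrow> nat) \<Rightarrow> nat \<Rightarrow> nat \<Rightarrow> bool" where
  "cfgv N K m \<sigma> c j \<longleftrightarrow> j \<le> K + m \<and> (\<exists>k<N. c = Suc k + \<sigma> k j)"

definition cfgh :: "nat \<Rightarrow> nat \<Rightarrow> nat \<Rightarrow> (nat \<Rightarrow> nat \<Rightarrow> nat) \<Rightarrow> nat \<Rightarrow> nat \<Rightarrow> bool" where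
  "cfgh N K m \<sigma> i t \<longleftrightarrow> 1 \<le> t \<and> t \<le> K + m \<and>
     (\<exists>k<N. i = Suc k + \<sigma> k (t - 1) \<and> \<sigma> k t = Suc (\<sigma> k (t - 1)))"

definition cfg :: "nat \<Rightarrow> nat \<Rightarrow> nat \<Rightarrow> (nat \<Rightarrow> nat \<Rightarrow> nat) \<Rightarrow> (nat \<Rightarrow> nat \<Rightarrow> bool) \<times> (nat \<Rightarrow> nat \<Rightarrow> bool)" where
  "cfg N K m \<sigma> = (cfgh N K m \<sigma>, cfgv N K m \<sigma>)"

context
  fixes N K m :: nat and \<sigma> :: "nat \<Rightarrow> nat \<Rightarrow> nat"
  assumes F: "\<sigma> \<in> Fam N K m"
begin

lemma F_ok: "k < N \<Longrightarrow> path_ok K m (\<sigma> k)" using F by (simp add: Fam_def)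

lemma F_step: "k < N \<Longrightarrow> 1 \<le> t \<Longrightarrow> t \<le> K + m \<Longrightarrow> \<sigma> k t = \<sigma> k (t - 1) \<or> \<sigma> k t = Suc (\<sigma> k (t - 1))"
  using path_step[OF F_ok, of k "t - 1"] by simp

lemma F_cross1: "Suc k < N \<Longrightarrow> 1 \<le> t \<Longrightarrow> t \<le> K + m \<Longrightarrow> \<sigma> k t \<le> \<sigma> (Suc k) (t - 1)"
  using F by (simp add: Fam_def)

lemma F_mono1: "Suc k < N \<Longrightarrow> j \<le> K + m \<Longrightarrow> Suc k + \<sigma> k j < Suc (Suc k) + \<sigma> (Suc k) j"
proof (cases "j = 0")
  case True
  assume "Suc k < N"
  then show ?thesis using True F_ok[of k] F_ok[of "Suc k"] by (simp add: path_ok_def)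
next
  case False
  assume k: "Suc k < N" and j: "j \<le> K + m"
  have "\<sigma> k j \<le> \<sigma> (Suc k) (j - 1)" using F_cross1[OF k] False j by simp
  also have "\<dots> \<le> \<sigma> (Suc k) j" using path_lip[OF F_ok[OF k], of "j - 1" j] j by simp
  finally show ?thesis by simp
qed

lemma F_mono: "k < k' \<Longrightarrow> k' < N \<Longrightarrow> j \<le> K + m \<Longrightarrow> Suc k + \<sigma> k j < Suc k' + \<sigma> k' j"
proof (induction k' rule: less_induct)
  case (less k')
  show ?case
  proof (cases "k = k' - 1")
    case True then show ?thesis using F_mono1[of k j] less.prems by simp
  next
    case False
    then have "k < k' - 1" using less.prems by simp
    then have "Suc k + \<sigma> k j < Suc (k' - 1) + \<sigma> (k' - 1) j" using less.IH[of "k' - 1"] less.prems by simp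
    also have "\<dots> < Suc k' + \<sigma> k' j" using F_mono1[of "k' - 1" j] less.prems by simp
    finally show ?thesis .
  qed
qed

lemma F_inj: "k < N \<Longrightarrow> k' < N \<Longrightarrow> j \<le> K + m \<Longrightarrow> Suc k + \<sigma> k j = Suc k' + \<sigma> k' j \<Longrightarrow> k = k'"
  using F_mono[of k k' j] F_mono[of k' k j] by (cases k k' rule: linorder_cases) auto

lemma F_cross: "k < k' \<Longrightarrow> k' < N \<Longrightarrow> 1 \<le> t \<Longrightarrow> t \<le> K + m \<Longrightarrow> Suc k + \<sigma> k t < Suc k' + \<sigma> k' (t - 1)"
proof -
  assume a: "k < k'" "k' < N" "1 \<le> t" "t \<le> K + m"
  have "Suc k + \<sigma> k t < Suc (Suc k) + \<sigma> (Suc k) (t - 1)" using F_cross1[of k t] a by simp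
  also have "\<dots> \<le> Suc k' + \<sigma> k' (t - 1)"
  proof (cases "Suc k = k'")
    case False
    then have "Suc k < k'" using a by simp
    moreover have "t - 1 \<le> K + m" using a by simp
    ultimately show ?thesis using F_mono[of "Suc k" k' "t - 1"] a by simp
  qed simp
  finally show ?thesis .
qed

lemma F_leK: "k < N \<Longrightarrow> j \<le> K + m \<Longrightarrow> \<sigma> k j \<le> K" using path_leK[OF F_ok] by simp

lemma cfg_vertex_ok:
  assumes c: "1 \<le> c" and t: "1 \<le> t" "t \<le> K + m"
  shows "vertex_ok (cfgh N K m \<sigma> (c - 1) t) (cfgh N K m \<sigma> c t) (cfgv N K m \<sigma> c (t - 1)) (cfgv N K m \<sigma> c t)"
proof -
  let ?pos = "\<lambda>k j. Suc k + \<sigma> k j"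
  let ?st = "\<lambda>k. \<sigma> k t = Suc (\<sigma> k (t - 1))"
  have tm: "t - 1 \<le> K + m" using t by simp
  have stp: "\<not> ?st k \<Longrightarrow> \<sigma> k t = \<sigma> k (t - 1)" if "k < N" for k using F_step[OF that t] by auto
  define w where "w = cfgh N K m \<sigma> (c - 1) t"
  define e where "e = cfgh N K m \<sigma> c t"
  define s where "s = cfgv N K m \<sigma> c (t - 1)"
  define nn where "nn = cfgv N K m \<sigma> c t"
  have w_iff: "w \<longleftrightarrow> (\<exists>k<N. c - 1 = ?pos k (t - 1) \<and> ?st k)" using t by (simp add: w_def cfgh_def)
  have e_iff: "e \<longleftrightarrow> (\<exists>k<N. c = ?pos k (t - 1) \<and> ?st k)" using t by (simp add: e_def cfgh_def)
  have s_iff: "s \<longleftrightarrow> (\<exists>k<N. c = ?pos k (t - 1))" using t tm by (simp add: s_def cfgv_def)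
  have n_iff: "nn \<longleftrightarrow> (\<exists>k<N. c = ?pos k t)" using t by (simp add: nn_def cfgv_def)
  have es: "e \<Longrightarrow> s" using e_iff s_iff by blast
  have ws: "w \<Longrightarrow> \<not> s"
  proof
    assume "w" "s"
    then obtain k k' where k: "k < N" "c - 1 = ?pos k (t - 1)" "?st k"
      and k': "k' < N" "c = ?pos k' (t - 1)" using w_iff s_iff by blast
    show False
    proof (cases k k' rule: linorder_cases)
      case less
      then show ?thesis using F_cross[OF less k'(1) t] k k' by simp
    next
      case equal then show ?thesis using k k' by simp
    next
      case greater
      then show ?thesis using F_mono[OF greater k(1) tm] k k' by simp
    qed
  qed
  have en: "e \<Longrightarrow> \<not> nn"
  proof
    assume "e" "nn"
    then obtain k k' where k: "k < N" "c = ?pos k (t - 1)" "?st k"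
      and k': "k' < N" "c = ?pos k' t" using e_iff n_iff by blast
    show False
    proof (cases k k' rule: linorder_cases)
      case less
      have "?pos k (t - 1) < ?pos k' (t - 1)" using F_mono[OF less k'(1) tm] .
      also have "\<dots> \<le> ?pos k' t" using path_lip[OF F_ok[OF k'(1)], of "t - 1" t] t by simp
      finally show ?thesis using k k' by simp
    next
      case equal then show ?thesis using k k' by simp
    next
      case greater
      then show ?thesis using F_cross[OF greater k(1) t] k k' by simp
    qed
  qed
  have sen: "s \<Longrightarrow> \<not> e \<Longrightarrow> nn"
  proof -
    assume "s" "\<not> e"
    then obtain k where k: "k < N" "c = ?pos k (t - 1)" using s_iff by blast
    then have "\<not> ?st k" using \<open>\<not> e\<close> e_iff by blast
    then show nn using stp[OF k(1)] k n_iff by auto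
  qed
  have wn: "w \<Longrightarrow> nn"
  proof -
    assume "w"
    then obtain k where k: "k < N" "c - 1 = ?pos k (t - 1)" "?st k" using w_iff by blast
    then have "c = ?pos k t" by simp
    then show nn using n_iff k(1) by blast
  qed
  have nsw: "nn \<Longrightarrow> s \<or> w"
  proof -
    assume "nn"
    then obtain k where k: "k < N" "c = ?pos k t" using n_iff by blast
    show "s \<or> w"
    proof (cases "?st k")
      case True
      then have "c - 1 = ?pos k (t - 1)" using k by simp
      then show ?thesis using w_iff k True by blast
    next
      case False
      then show ?thesis using stp[OF k(1)] k s_iff by auto
    qed
  qed
  have "vertex_ok w e s nn"
    unfolding vertex_ok_def
  proof (cases s)
    case True
    then show "(\<not> w \<and> \<not> e \<and> \<not> s \<and> \<not> nn) \<or> (s \<and> nn \<and> \<not> w \<and> \<not> e) \<or> (s \<and> e \<and> \<not> w \<and> \<not> nn) \<or> (w \<and> nn \<and> \<not> s \<and> \<not> e)"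
      using ws en sen by blast
  next
    case False
    then show "(\<not> w \<and> \<not> e \<and> \<not> s \<and> \<not> nn) \<or> (s \<and> nn \<and> \<not> w \<and> \<not> e) \<or> (s \<and> e \<and> \<not> w \<and> \<not> nn) \<or> (w \<and> nn \<and> \<not> s \<and> \<not> e)"
      using es wn nsw by blast
  qed
  then show ?thesis by (simp add: w_def e_def s_def nn_def)
qed

lemma cfg_in: "cfg N K m \<sigma> \<in> sp_configs (K + N) (K + m) N"
  unfolding sp_configs_def cfg_def
proof (intro CollectI case_prodI conjI allI impI)
  fix i t assume "\<not> (i \<le> K + N \<and> 1 \<le> t \<and> t \<le> K + m)"
  then show "\<not> cfgh N K m \<sigma> i t"
    using F_leK by (fastforce simp: cfgh_def)
next
  fix c j assume "\<not> (1 \<le> c \<and> c \<le> K + N \<and> j \<le> K + m)"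
  then show "\<not> cfgv N K m \<sigma> c j"
    using F_leK by (fastforce simp: cfgv_def)
next
  fix t assume t: "1 \<le> t \<and> t \<le> K + m"
  show "\<not> cfgh N K m \<sigma> 0 t" by (simp add: cfgh_def)
  show "\<not> cfgh N K m \<sigma> (K + N) t"
  proof
    assume "cfgh N K m \<sigma> (K + N) t"
    then obtain k where k: "k < N" "K + N = Suc k + \<sigma> k (t - 1)" "\<sigma> k t = Suc (\<sigma> k (t - 1))"
      by (auto simp: cfgh_def)
    then show False using F_leK[of k t] t by simp
  qed
next
  fix c assume c: "1 \<le> c \<and> c \<le> K + N"
  show "cfgv N K m \<sigma> c 0 = (c \<le> N)"
  proof
    assume "cfgv N K m \<sigma> c 0"
    then show "c \<le> N" using F_ok by (auto simp: cfgv_def path_ok_def)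
  next
    assume "c \<le> N"
    then show "cfgv N K m \<sigma> c 0" using c F_ok[of "c - 1"]
      by (auto simp: cfgv_def path_ok_def intro!: exI[of _ "c - 1"])
  qed
  show "cfgv N K m \<sigma> c (K + m) = (K + N - N + 1 \<le> c)"
  proof
    assume "cfgv N K m \<sigma> c (K + m)"
    then show "K + N - N + 1 \<le> c" using F_ok by (auto simp: cfgv_def path_ok_def)
  next
    assume "K + N - N + 1 \<le> c"
    then show "cfgv N K m \<sigma> c (K + m)" using c F_ok[of "c - Suc K"]
      by (auto simp: cfgv_def path_ok_def intro!: exI[of _ "c - Suc K"])
  qed
next
  fix c t assume a: "1 \<le> c \<and> c \<le> K + N \<and> 1 \<le> t \<and> t \<le> K + m"
  show "vertex_ok (cfgh N K m \<sigma> (c - 1) t) (cfgh N K m \<sigma> c t) (cfgv N K m \<sigma> c (t - 1)) (cfgv N K m \<sigma> c t)"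
    using cfg_vertex_ok a by simp
qed

end


lemma slos_eq:
  fixes xs :: "nat list"
  assumes "finite A" "sorted_wrt (<) xs" "set xs = A"
  shows "sorted_list_of_set A = xs"
proof -
  have a: "sorted_wrt (<) (sorted_list_of_set A)" by (rule strict_sorted_list_of_set)
  have b: "set (sorted_list_of_set A) = A" using assms(1) by simp
  show ?thesis using strict_sorted_equal[OF assms(2) a] b assms(3) by simp
qed

definition Xs :: "(nat \<Rightarrow> nat \<Rightarrow> bool) \<Rightarrow> nat \<Rightarrow> nat list" where
  "Xs v j = sorted_list_of_set {c. v c j}"

definition sig :: "nat \<Rightarrow> nat \<Rightarrow> nat \<Rightarrow> (nat \<Rightarrow> nat \<Rightarrow> bool) \<Rightarrow> nat \<Rightarrow> nat \<Rightarrow> nat" where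
  "sig N K m v k j = (if k < N \<and> j \<le> K + m then Xs v j ! k - Suc k else 0)"

context
  fixes N K m :: nat and h v :: "nat \<Rightarrow> nat \<Rightarrow> bool"
  assumes C: "(h, v) \<in> sp_configs (K + N) (K + m) N"
begin

lemma C_ext_h: "\<not> (i \<le> K + N \<and> 1 \<le> t \<and> t \<le> K + m) \<Longrightarrow> \<not> h i t"
  using C by (simp add: sp_configs_def)
lemma C_ext_v: "\<not> (1 \<le> c \<and> c \<le> K + N \<and> j \<le> K + m) \<Longrightarrow> \<not> v c j"
  using C by (simp add: sp_configs_def)
lemma C_v_range: "v c j \<Longrightarrow> 1 \<le> c \<and> c \<le> K + N \<and> j \<le> K + m"
  using C_ext_v by blast
lemma C_bnd: "1 \<le> t \<Longrightarrow> t \<le> K + m \<Longrightarrow> \<not> h 0 t \<and> \<not> h (K + N) t"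
  using C by (simp add: sp_configs_def)
lemma C_bot: "1 \<le> c \<Longrightarrow> c \<le> K + N \<Longrightarrow> v c 0 \<longleftrightarrow> c \<le> N"
  using C by (simp add: sp_configs_def)
lemma C_top: "1 \<le> c \<Longrightarrow> c \<le> K + N \<Longrightarrow> v c (K + m) \<longleftrightarrow> Suc K \<le> c"
  using C by (simp add: sp_configs_def)
lemma C_vok: "1 \<le> c \<Longrightarrow> c \<le> K + N \<Longrightarrow> 1 \<le> t \<Longrightarrow> t \<le> K + m \<Longrightarrow>
   vertex_ok (h (c - 1) t) (h c t) (v c (t - 1)) (v c t)"
  using C by (simp add: sp_configs_def)

lemma C_hv: "1 \<le> t \<Longrightarrow> t \<le> K + m \<Longrightarrow> h c t \<longleftrightarrow> v c (t - 1) \<and> \<not> v c t"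
proof -
  assume t: "1 \<le> t" "t \<le> K + m"
  show ?thesis
  proof (cases "1 \<le> c \<and> c \<le> K + N")
    case True
    then show ?thesis using C_vok[of c t] t by (auto simp: vertex_ok_def)
  next
    case False
    then have "\<not> v c (t - 1)" using C_v_range[of c "t - 1"] by blast
    moreover have "\<not> h c t"
    proof (cases "c = 0")
      case True then show ?thesis using C_bnd[OF t] by simp
    next
      case False
      then have "\<not> c \<le> K + N" using \<open>\<not> (1 \<le> c \<and> c \<le> K + N)\<close> by simp
      then show ?thesis using C_ext_h[of c t] by blast
    qed
    ultimately show ?thesis by simp
  qed
qed

definition fstep :: "nat \<Rightarrow> nat \<Rightarrow> nat" where "fstep t c = (if v c t then c else Suc c)"

lemma S_fin: "finite {c. v c j}"
proof -
  have "{c. v c j} \<subseteq> {1..K + N}"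
  proof
    fix x assume "x \<in> {c. v c j}" then show "x \<in> {1..K + N}" using C_v_range[of x j] by simp
  qed
  then show ?thesis using finite_subset by blast
qed

lemma T1: "1 \<le> t \<Longrightarrow> t \<le> K + m \<Longrightarrow> v c (t - 1) \<Longrightarrow> v (fstep t c) t"
proof -
  assume t: "1 \<le> t" "t \<le> K + m" and s: "v c (t - 1)"
  show "v (fstep t c) t"
  proof (cases "v c t")
    case True then show ?thesis by (simp add: fstep_def)
  next
    case False
    then have hc: "h c t" using C_hv[OF t] s by simp
    have c1: "c \<le> K + N" using C_ext_h[of c t] hc t by blast
    have c2: "c \<noteq> K + N" "c \<noteq> 0"
    proof -
      show "c \<noteq> K + N" using hc C_bnd[OF t] by metis
      show "c \<noteq> 0" using hc C_bnd[OF t] by metis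
    qed
    have cL: "c \<le> K + N" "c \<noteq> K + N" "1 \<le> c" using c1 c2 by auto
    have "vertex_ok (h (Suc c - 1) t) (h (Suc c) t) (v (Suc c) (t - 1)) (v (Suc c) t)"
      by (rule C_vok) (use cL t in auto)
    then have "v (Suc c) t" using hc by (auto simp: vertex_ok_def)
    then show ?thesis using False by (simp add: fstep_def)
  qed
qed

lemma T2: "1 \<le> t \<Longrightarrow> t \<le> K + m \<Longrightarrow> v c' t \<Longrightarrow> \<exists>c. v c (t - 1) \<and> fstep t c = c'"
proof -
  assume t: "1 \<le> t" "t \<le> K + m" and n: "v c' t"
  have c': "1 \<le> c'" "c' \<le> K + N" using C_v_range[OF n] by auto
  have vo: "vertex_ok (h (c' - 1) t) (h c' t) (v c' (t - 1)) (v c' t)" using C_vok c' t by simp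
  show ?thesis
  proof (cases "v c' (t - 1)")
    case True
    then show ?thesis using n by (auto simp: fstep_def)
  next
    case False
    then have w: "h (c' - 1) t" using vo n by (auto simp: vertex_ok_def)
    then have "c' - 1 \<noteq> 0" using C_bnd[OF t] by auto
    then have "v (c' - 1) (t - 1) \<and> \<not> v (c' - 1) t" using C_hv[OF t] w by simp
    moreover have "fstep t (c' - 1) = c'" using calculation \<open>c' - 1 \<noteq> 0\<close> by (simp add: fstep_def)
    ultimately show ?thesis by blast
  qed
qed

lemma T3: "1 \<le> t \<Longrightarrow> t \<le> K + m \<Longrightarrow> v c (t - 1) \<Longrightarrow> v c' (t - 1) \<Longrightarrow> c < c' \<Longrightarrow> fstep t c < c'"
proof -
  assume t: "1 \<le> t" "t \<le> K + m" and s: "v c (t - 1)" "v c' (t - 1)" and lt: "c < c'"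
  show "fstep t c < c'"
  proof (cases "v c t")
    case True then show ?thesis using lt by (simp add: fstep_def)
  next
    case False
    show ?thesis
    proof (rule ccontr)
      assume "\<not> fstep t c < c'"
      then have e: "c' = Suc c" using lt False by (simp add: fstep_def)
      have hc: "h c t" using C_hv[OF t] s False by simp
      have c': "1 \<le> c'" "c' \<le> K + N" using C_v_range[OF s(2)] by auto
      have "vertex_ok (h (c' - 1) t) (h c' t) (v c' (t - 1)) (v c' t)" using C_vok c' t by simp
      then show False using hc s(2) e by (simp add: vertex_ok_def)
    qed
  qed
qed

lemma fstep_ge: "c \<le> fstep t c" by (simp add: fstep_def)

lemma Xs_step: "1 \<le> t \<Longrightarrow> t \<le> K + m \<Longrightarrow> Xs v t = map (fstep t) (Xs v (t - 1))"
proof -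
  assume t: "1 \<le> t" "t \<le> K + m"
  let ?xs = "Xs v (t - 1)"
  have sx: "sorted_wrt (<) ?xs" unfolding Xs_def by (rule strict_sorted_list_of_set)
  have setx: "set ?xs = {c. v c (t - 1)}" unfolding Xs_def using S_fin by simp
  have fm: "fstep t a < fstep t b" if "a \<in> set ?xs" "b \<in> set ?xs" "a < b" for a b
  proof -
    have "fstep t a < b" using T3[OF t, of a b] that setx by simp
    also have "b \<le> fstep t b" by (rule fstep_ge)
    finally show ?thesis .
  qed
  have s1: "sorted_wrt (<) (map (fstep t) ?xs)"
    unfolding sorted_wrt_map by (rule sorted_wrt_mono_rel[OF _ sx]) (rule fm)
  have s2: "set (map (fstep t) ?xs) = {c. v c t}"
  proof (rule Set.set_eqI)
    fix c'
    show "c' \<in> set (map (fstep t) ?xs) \<longleftrightarrow> c' \<in> {c. v c t}"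
    proof
      assume "c' \<in> set (map (fstep t) ?xs)"
      then obtain c where "c \<in> set ?xs" "c' = fstep t c" by auto
      then show "c' \<in> {c. v c t}" using T1[OF t, of c] setx by simp
    next
      assume "c' \<in> {c. v c t}"
      then obtain c where "v c (t - 1)" "fstep t c = c'" using T2[OF t, of c'] by auto
      then show "c' \<in> set (map (fstep t) ?xs)" using setx by force
    qed
  qed
  have "sorted_list_of_set {c. v c t} = map (fstep t) ?xs"
    by (rule slos_eq[OF S_fin s1 s2])
  then show ?thesis by (simp add: Xs_def)
qed

lemma Xs0: "Xs v 0 = [1..<Suc N]"
proof -
  have "v x 0 \<longleftrightarrow> x \<in> {1..<Suc N}" for x using C_v_range[of x 0] C_bot[of x] by auto
  then have "{c. v c 0} = {1..<Suc N}" by blast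
  then show ?thesis by (simp add: Xs_def)
qed

lemma XsM: "Xs v (K + m) = [Suc K..<Suc (K + N)]"
proof -
  have "v x (K + m) \<longleftrightarrow> x \<in> {Suc K..<Suc (K + N)}" for x using C_v_range[of x "K + m"] C_top[of x] by auto
  then have "{c. v c (K + m)} = {Suc K..<Suc (K + N)}" by blast
  then show ?thesis by (simp add: Xs_def)
qed

lemma Xs_len: "j \<le> K + m \<Longrightarrow> length (Xs v j) = N"
proof (induction j)
  case 0 then show ?case by (simp add: Xs0)
next
  case (Suc j) then show ?case using Xs_step[of "Suc j"] by simp
qed

lemma Xs_nth_step: "1 \<le> t \<Longrightarrow> t \<le> K + m \<Longrightarrow> k < N \<Longrightarrow> Xs v t ! k = fstep t (Xs v (t - 1) ! k)"
  using Xs_step Xs_len by simp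

lemma Xs_in: "j \<le> K + m \<Longrightarrow> k < N \<Longrightarrow> v (Xs v j ! k) j"
proof -
  assume "j \<le> K + m" "k < N"
  then have "Xs v j ! k \<in> set (Xs v j)" using Xs_len by simp
  then show ?thesis using S_fin by (simp add: Xs_def)
qed

lemma Xs_sorted: "j \<le> K + m \<Longrightarrow> k < k' \<Longrightarrow> k' < N \<Longrightarrow> Xs v j ! k < Xs v j ! k'"
proof -
  assume a: "j \<le> K + m" "k < k'" "k' < N"
  have "sorted_wrt (<) (Xs v j)" unfolding Xs_def by (rule strict_sorted_list_of_set)
  then show ?thesis using sorted_wrt_nth_less[of "(<)" "Xs v j" k k'] a Xs_len by simp
qed

lemma Xs_ge: "j \<le> K + m \<Longrightarrow> k < N \<Longrightarrow> Suc k \<le> Xs v j ! k"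
proof (induction j)
  case 0 then show ?case by (simp add: Xs0 del: upt_Suc)
next
  case (Suc j)
  then show ?case using Xs_nth_step[of "Suc j" k] fstep_ge[of "Xs v j ! k" "Suc j"] by simp
qed

lemma Xs_cross: "1 \<le> t \<Longrightarrow> t \<le> K + m \<Longrightarrow> Suc k < N \<Longrightarrow> Xs v t ! k < Xs v (t - 1) ! Suc k"
proof -
  assume a: "1 \<le> t" "t \<le> K + m" "Suc k < N"
  have "Xs v t ! k = fstep t (Xs v (t - 1) ! k)" using Xs_nth_step a by simp
  also have "\<dots> < Xs v (t - 1) ! Suc k"
    by (rule T3) (use a Xs_in Xs_sorted in auto)
  finally show ?thesis .
qed

lemma sig_Fam: "sig N K m v \<in> Fam N K m"
  unfolding Fam_def
proof (intro CollectI conjI allI impI)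
  fix k j assume "N \<le> k \<or> K + m < j" then show "sig N K m v k j = 0" unfolding sig_def by auto
next
  fix k assume k: "k < N"
  show "path_ok K m (sig N K m v k)"
    unfolding path_ok_def
  proof (intro conjI allI impI)
    show "sig N K m v k 0 = 0" using k by (simp add: sig_def Xs0 del: upt_Suc)
    show "sig N K m v k (K + m) = K" using k by (simp add: sig_def XsM nth_upt del: upt_Suc)
    fix j assume j: "j < K + m"
    have e: "Xs v (Suc j) ! k = fstep (Suc j) (Xs v j ! k)" using Xs_nth_step[of "Suc j" k] j k by simp
    have g: "Suc k \<le> Xs v j ! k" using Xs_ge j k by simp
    have sj: "sig N K m v k j = Xs v j ! k - Suc k" using j k by (simp add: sig_def)
    have sj1: "sig N K m v k (Suc j) = Xs v (Suc j) ! k - Suc k" using j k by (simp add: sig_def)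
    show "sig N K m v k (Suc j) = sig N K m v k j \<or> sig N K m v k (Suc j) = Suc (sig N K m v k j)"
    proof (cases "v (Xs v j ! k) (Suc j)")
      case True
      then have "fstep (Suc j) (Xs v j ! k) = Xs v j ! k" by (simp add: fstep_def)
      then show ?thesis unfolding sj sj1 e by simp
    next
      case False
      then have "fstep (Suc j) (Xs v j ! k) = Suc (Xs v j ! k)" by (simp add: fstep_def)
      moreover have "Suc (Xs v j ! k) - Suc k = Suc (Xs v j ! k - Suc k)" using g by arith
      ultimately show ?thesis unfolding sj sj1 e by simp
    qed
  qed
next
  fix k j assume a: "Suc k < N" "1 \<le> j" "j \<le> K + m"
  have "Xs v j ! k < Xs v (j - 1) ! Suc k" using Xs_cross a by simp
  moreover have "Suc k \<le> Xs v j ! k" using Xs_ge a by simp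
  moreover have "j - 1 \<le> K + m" using a by simp
  ultimately have "Xs v j ! k - Suc k \<le> Xs v (j - 1) ! Suc k - Suc (Suc k)" by arith
  then show "sig N K m v k j \<le> sig N K m v (Suc k) (j - 1)" using a \<open>j - 1 \<le> K + m\<close> by (simp add: sig_def)
qed

lemma cfg_sig: "cfg N K m (sig N K m v) = (h, v)"
proof -
  have V: "cfgv N K m (sig N K m v) c j = v c j" for c j
  proof (cases "j \<le> K + m")
    case True
    have eq: "Suc k + sig N K m v k j = Xs v j ! k" if "k < N" for k
      using True Xs_ge[OF True that] that by (simp add: sig_def)
    have "cfgv N K m (sig N K m v) c j \<longleftrightarrow> (\<exists>k<N. c = Xs v j ! k)"
    proof
      assume "cfgv N K m (sig N K m v) c j"
      then obtain k where "k < N" "c = Suc k + sig N K m v k j" by (auto simp: cfgv_def)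
      then show "\<exists>k<N. c = Xs v j ! k" using eq by auto
    next
      assume "\<exists>k<N. c = Xs v j ! k"
      then obtain k where k: "k < N" "c = Xs v j ! k" by auto
      then have "c = Suc k + sig N K m v k j" using eq by simp
      then show "cfgv N K m (sig N K m v) c j" using k True by (auto simp: cfgv_def)
    qed
    also have "\<dots> \<longleftrightarrow> c \<in> set (Xs v j)" using Xs_len[OF True] by (auto simp: in_set_conv_nth)
    also have "\<dots> \<longleftrightarrow> v c j" using S_fin by (simp add: Xs_def)
    finally show ?thesis .
  next
    case False then show ?thesis using C_ext_v by (simp add: cfgv_def)
  qed
  have H: "cfgh N K m (sig N K m v) i t = h i t" for i t
  proof (cases "1 \<le> t \<and> t \<le> K + m")
    case True
    then have t: "1 \<le> t" "t \<le> K + m" by auto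
    have "cfgh N K m (sig N K m v) i t \<longleftrightarrow>
          (\<exists>k<N. i = Xs v (t - 1) ! k \<and> Xs v t ! k = Suc (Xs v (t - 1) ! k))"
    proof -
      have "sig N K m v k t = Suc (sig N K m v k (t - 1)) \<longleftrightarrow> Xs v t ! k = Suc (Xs v (t - 1) ! k)"
        if "k < N" for k
        using Xs_ge[of t k] Xs_ge[of "t - 1" k] t that by (auto simp: sig_def)
      moreover have "Suc k + sig N K m v k (t - 1) = Xs v (t - 1) ! k" if "k < N" for k
      proof -
        have "t - 1 \<le> K + m" using t by simp
        then show ?thesis using Xs_ge[of "t - 1" k] that by (simp add: sig_def)
      qed
      ultimately show ?thesis using t by (auto simp: cfgh_def)
    qed
    also have "\<dots> \<longleftrightarrow> (\<exists>k<N. i = Xs v (t - 1) ! k \<and> \<not> v i t)"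
      using Xs_nth_step[OF t] by (auto simp: fstep_def)
    also have "\<dots> \<longleftrightarrow> v i (t - 1) \<and> \<not> v i t"
    proof -
      have "(\<exists>k<N. i = Xs v (t - 1) ! k) \<longleftrightarrow> v i (t - 1)"
      proof -
        have "(\<exists>k<N. i = Xs v (t - 1) ! k) \<longleftrightarrow> i \<in> set (Xs v (t - 1))"
          using Xs_len[of "t - 1"] t by (auto simp: in_set_conv_nth)
        also have "\<dots> \<longleftrightarrow> v i (t - 1)" using S_fin by (simp add: Xs_def)
        finally show ?thesis .
      qed
      then show ?thesis by blast
    qed
    also have "\<dots> \<longleftrightarrow> h i t" using C_hv[OF t] by simp
    finally show ?thesis .
  next
    case False then show ?thesis using C_ext_h by (auto simp: cfgh_def)
  qed
  show ?thesis using V H by (auto simp: cfg_def fun_eq_iff)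
qed

end

lemma sig_cfg:
  assumes F: "\<sigma> \<in> Fam N K m"
  shows "sig N K m (cfgv N K m \<sigma>) = \<sigma>"
proof (intro ext)
  fix k j
  show "sig N K m (cfgv N K m \<sigma>) k j = \<sigma> k j"
  proof (cases "k < N \<and> j \<le> K + m")
    case True
    have "Xs (cfgv N K m \<sigma>) j = map (\<lambda>k. Suc k + \<sigma> k j) [0..<N]"
      unfolding Xs_def
    proof (rule slos_eq)
      have "{c. cfgv N K m \<sigma> c j} \<subseteq> (\<lambda>k. Suc k + \<sigma> k j) ` {0..<N}"
        by (auto simp: cfgv_def)
      then show "finite {c. cfgv N K m \<sigma> c j}" using finite_subset by blast
      show "sorted_wrt (<) (map (\<lambda>k. Suc k + \<sigma> k j) [0..<N])"
        unfolding sorted_wrt_map using F_mono[OF F] True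
        by (auto simp: sorted_wrt_iff_nth_less)
      show "set (map (\<lambda>k. Suc k + \<sigma> k j) [0..<N]) = {c. cfgv N K m \<sigma> c j}"
        using True by (auto simp: cfgv_def)
    qed
    then show ?thesis using True by (simp add: sig_def)
  next
    case False then show ?thesis using F by (auto simp: sig_def Fam_def not_le)
  qed
qed


context
  fixes N K m n :: nat and \<sigma> :: "nat \<Rightarrow> nat \<Rightarrow> nat"
  assumes F: "\<sigma> \<in> Fam N K m" and N0: "0 < N" and m1: "1 \<le> m" and n1: "1 \<le> n" and nK: "n \<le> Suc K"
begin

lemma ok0: "path_ok K m (\<sigma> 0)" using F_ok[OF F N0] .

lemma pf_to_pos:
  assumes "Pf K (\<sigma> 0) m = n - 1"
  shows "\<sigma> 0 (n + m - 1 - 1) = n - 1 \<and> \<sigma> 0 (n + m - 1) = n - 1"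
proof -
  have M0: "n + m - 1 \<le> K + m" using nK m1 by simp
  have lo: "n - 1 \<le> \<sigma> 0 (n + m - 1)" using path_geb[OF ok0 M0] by simp
  have hi: "\<sigma> 0 (n + m - 1) \<le> n - 1"
  proof (cases "n \<le> K")
    case True
    have "\<not> n \<le> Pf K (\<sigma> 0) m" using assms n1 by simp
    then have "\<not> n \<le> \<sigma> 0 (n + m - 1)" using Pf_iff[OF ok0 m1 _ n1 True] by simp
    then show ?thesis by simp
  next
    case False
    then show ?thesis using path_leK[OF ok0 M0] nK by simp
  qed
  have e1: "\<sigma> 0 (n + m - 1) = n - 1" using lo hi by simp
  have "\<sigma> 0 (n + m - 1 - 1) = n - 1"
  proof (cases "n = 1")
    case True
    have "\<sigma> 0 (n + m - 1 - 1) \<le> \<sigma> 0 (n + m - 1)" using path_lip[OF ok0, of "n + m - 1 - 1" "n + m - 1"] M0 by simp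
    then show ?thesis using e1 True by simp
  next
    case False
    then have n2: "1 \<le> n - 1" using n1 by simp
    have "n - 1 \<le> Pf K (\<sigma> 0) m" using assms by simp
    then have "n - 1 \<le> \<sigma> 0 (n - 1 + m - 1)" using Pf_iff[OF ok0 m1 _ n2] nK by simp
    moreover have "n - 1 + m - 1 = n + m - 1 - 1" using n1 by simp
    moreover have "\<sigma> 0 (n + m - 1 - 1) \<le> \<sigma> 0 (n + m - 1)" using path_lip[OF ok0, of "n + m - 1 - 1" "n + m - 1"] M0 by simp
    ultimately show ?thesis using e1 by simp
  qed
  then show ?thesis using e1 by simp
qed

lemma pos_to_pf:
  assumes "\<sigma> 0 (n + m - 1 - 1) = n - 1" "\<sigma> 0 (n + m - 1) = n - 1"
  shows "Pf K (\<sigma> 0) m = n - 1"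
proof (rule antisym)
  show "Pf K (\<sigma> 0) m \<le> n - 1"
  proof (cases "n \<le> K")
    case True
    have "\<not> n \<le> \<sigma> 0 (n + m - 1)" using assms(2) n1 by simp
    then have "\<not> n \<le> Pf K (\<sigma> 0) m" using Pf_iff[OF ok0 m1 _ n1 True] by simp
    then show ?thesis by simp
  next
    case False
    then show ?thesis using Pf_leK[OF ok0, of m] nK by simp
  qed
  show "n - 1 \<le> Pf K (\<sigma> 0) m"
  proof (cases "n = 1")
    case False
    then have n2: "1 \<le> n - 1" using n1 by simp
    have "n - 1 + m - 1 = n + m - 1 - 1" using n1 by simp
    then have "n - 1 \<le> \<sigma> 0 (n - 1 + m - 1)" using assms(1) by simp
    then show ?thesis using Pf_iff[OF ok0 m1 _ n2] nK by simp
  qed simp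
qed

lemma cond_iff: "is_b_at (cfg N K m \<sigma>) n (n + m - 1) \<longleftrightarrow> Pf K (\<sigma> 0) m = n - 1"
proof -
  let ?m0 = "n + m - 1"
  let ?pos = "\<lambda>k j. Suc k + \<sigma> k j"
  have M0: "?m0 \<le> K + m" "1 \<le> ?m0" using nK m1 n1 by auto
  have M1: "?m0 - 1 \<le> K + m" using M0 by simp
  have b_iff: "is_b_at (cfg N K m \<sigma>) n ?m0 \<longleftrightarrow>
    cfgv N K m \<sigma> n (?m0 - 1) \<and> cfgv N K m \<sigma> n ?m0 \<and> \<not> cfgh N K m \<sigma> (n - 1) ?m0 \<and> \<not> cfgh N K m \<sigma> n ?m0"
    by (simp add: is_b_at_def cfg_def vertex_b_def)
  have s_iff: "cfgv N K m \<sigma> n (?m0 - 1) \<longleftrightarrow> (\<exists>k<N. n = ?pos k (?m0 - 1))" using M1 by (simp add: cfgv_def)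
  have n_iff: "cfgv N K m \<sigma> n ?m0 \<longleftrightarrow> (\<exists>k<N. n = ?pos k ?m0)" using M0 by (simp add: cfgv_def)
  have e_iff: "cfgh N K m \<sigma> n ?m0 \<longleftrightarrow> (\<exists>k<N. n = ?pos k (?m0 - 1) \<and> \<sigma> k ?m0 = Suc (\<sigma> k (?m0 - 1)))"
    using M0 by (simp add: cfgh_def)
  have w_iff: "cfgh N K m \<sigma> (n - 1) ?m0 \<longleftrightarrow> (\<exists>k<N. n - 1 = ?pos k (?m0 - 1) \<and> \<sigma> k ?m0 = Suc (\<sigma> k (?m0 - 1)))"
    using M0 by (simp add: cfgh_def)
  show ?thesis
  proof
    assume "is_b_at (cfg N K m \<sigma>) n ?m0"
    then have s: "\<exists>k<N. n = ?pos k (?m0 - 1)" and ne: "\<not> (\<exists>k<N. n = ?pos k (?m0 - 1) \<and> \<sigma> k ?m0 = Suc (\<sigma> k (?m0 - 1)))"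
      using b_iff s_iff e_iff by auto
    obtain k where k: "k < N" "n = ?pos k (?m0 - 1)" using s by blast
    have k0: "k = 0"
    proof (rule ccontr)
      assume "k \<noteq> 0"
      have okk: "path_ok K m (\<sigma> k)" using F_ok[OF F k(1)] .
      have g1: "?m0 - 1 \<le> \<sigma> k (?m0 - 1) + m" using path_geb[OF okk M1] .
      have n2: "2 \<le> n" using k \<open>k \<noteq> 0\<close> by simp
      have k1: "k = 1" and sk: "\<sigma> k (?m0 - 1) = n - 2" using g1 k \<open>k \<noteq> 0\<close> n2 by auto
      have g2: "?m0 \<le> \<sigma> k ?m0 + m" using path_geb[OF okk M0(1)] .
      have st: "\<sigma> k ?m0 = \<sigma> k (?m0 - 1) \<or> \<sigma> k ?m0 = Suc (\<sigma> k (?m0 - 1))"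
        using F_step[OF F k(1) M0(2) M0(1)] .
      then have "\<sigma> k ?m0 = Suc (\<sigma> k (?m0 - 1))" using g2 sk n2 by auto
      then show False using ne k by blast
    qed
    have a: "\<sigma> 0 (?m0 - 1) = n - 1" using k k0 by simp
    have "\<sigma> 0 ?m0 \<noteq> Suc (\<sigma> 0 (?m0 - 1))" using ne k k0 by blast
    then have b: "\<sigma> 0 ?m0 = n - 1" using F_step[OF F N0 M0(2) M0(1)] a by auto
    show "Pf K (\<sigma> 0) m = n - 1" by (rule pos_to_pf) (use a b in auto)
  next
    assume "Pf K (\<sigma> 0) m = n - 1"
    from pf_to_pos[OF this] have a: "\<sigma> 0 (?m0 - 1) = n - 1" and b: "\<sigma> 0 ?m0 = n - 1" by auto
    have s: "cfgv N K m \<sigma> n (?m0 - 1)" using s_iff a N0 n1 by auto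
    have nn: "cfgv N K m \<sigma> n ?m0" using n_iff b N0 n1 by auto
    have ne: "\<not> cfgh N K m \<sigma> n ?m0"
    proof
      assume "cfgh N K m \<sigma> n ?m0"
      then obtain k where k: "k < N" "n = ?pos k (?m0 - 1)" "\<sigma> k ?m0 = Suc (\<sigma> k (?m0 - 1))"
        using e_iff by blast
      have "n = ?pos 0 (?m0 - 1)" using a n1 by simp
      then have "k = 0" using F_inj[OF F k(1) N0 M1] k by simp
      then show False using k a b by simp
    qed
    have nw: "\<not> cfgh N K m \<sigma> (n - 1) ?m0"
    proof
      assume "cfgh N K m \<sigma> (n - 1) ?m0"
      then obtain k where k: "k < N" "n - 1 = ?pos k (?m0 - 1)"
        using w_iff by blast
      have "?pos 0 (?m0 - 1) \<le> ?pos k (?m0 - 1)"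
        using F_mono[OF F, of 0 k "?m0 - 1"] k M1 by (cases "k = 0") auto
      then show False using k a n1 by simp
    qed
    show "is_b_at (cfg N K m \<sigma>) n ?m0" using b_iff s nn ne nw by simp
  qed
qed

end

lemma card_configs:
  assumes N0: "0 < N" and m1: "1 \<le> m" and n1: "1 \<le> n" and nK: "n \<le> Suc K"
  shows "card {c \<in> sp_configs (K + N) (K + m) N. is_b_at c n (n + m - 1)} = card (Famn N K m n)"
proof -
  have "bij_betw (cfg N K m) (Famn N K m n) {c \<in> sp_configs (K + N) (K + m) N. is_b_at c n (n + m - 1)}"
    unfolding bij_betw_def
  proof
    show "inj_on (cfg N K m) (Famn N K m n)"
    proof (rule inj_onI)
      fix \<sigma> \<tau> assume s: "\<sigma> \<in> Famn N K m n" and t: "\<tau> \<in> Famn N K m n" and e: "cfg N K m \<sigma> = cfg N K m \<tau>"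
      have "cfgv N K m \<sigma> = cfgv N K m \<tau>" using e by (simp add: cfg_def)
      have Fs: "\<sigma> \<in> Fam N K m" and Ft: "\<tau> \<in> Fam N K m" using s t by (auto simp: Famn_def)
      have "\<sigma> = sig N K m (cfgv N K m \<sigma>)" using sig_cfg[OF Fs] by simp
      also have "\<dots> = sig N K m (cfgv N K m \<tau>)" using \<open>cfgv N K m \<sigma> = cfgv N K m \<tau>\<close> by simp
      also have "\<dots> = \<tau>" using sig_cfg[OF Ft] by simp
      finally show "\<sigma> = \<tau>" .
    qed
    show "cfg N K m ` Famn N K m n = {c \<in> sp_configs (K + N) (K + m) N. is_b_at c n (n + m - 1)}"
    proof (intro equalityI subsetI)
      fix c assume "c \<in> cfg N K m ` Famn N K m n"
      then obtain \<sigma> where s: "\<sigma> \<in> Famn N K m n" and c: "c = cfg N K m \<sigma>" by blast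
      have F: "\<sigma> \<in> Fam N K m" and P: "Pf K (\<sigma> 0) m = n - 1" using s by (auto simp: Famn_def)
      show "c \<in> {c \<in> sp_configs (K + N) (K + m) N. is_b_at c n (n + m - 1)}"
        using cfg_in[OF F] cond_iff[OF F N0 m1 n1 nK] P c by simp
    next
      fix c assume c: "c \<in> {c \<in> sp_configs (K + N) (K + m) N. is_b_at c n (n + m - 1)}"
      obtain h v where hv: "c = (h, v)" by (cases c)
      have C: "(h, v) \<in> sp_configs (K + N) (K + m) N" using c hv by simp
      have F: "sig N K m v \<in> Fam N K m" using sig_Fam[OF C] .
      have eq: "cfg N K m (sig N K m v) = (h, v)" using cfg_sig[OF C] .
      have "Pf K (sig N K m v 0) m = n - 1"
        using cond_iff[OF F N0 m1 n1 nK] c hv eq by simp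
      then have "sig N K m v \<in> Famn N K m n" using F by (simp add: Famn_def)
      moreover have "c = cfg N K m (sig N K m v)" using eq hv by simp
      ultimately show "c \<in> cfg N K m ` Famn N K m n" by (intro image_eqI[where x="sig N K m v"])
    qed
  qed
  then show ?thesis by (simp add: bij_betw_same_card)
qed


lemma ff_fact: "k \<le> z \<Longrightarrow> ff (real z) k = fact z / fact (z - k)"
proof (induction k)
  case 0 then show ?case by simp
next
  case (Suc k)
  have e: "z - k = Suc (z - Suc k)" using Suc.prems by simp
  have f: "fact (z - k) = real (z - k) * (fact (z - Suc k) :: real)"
    by (simp only: e fact_Suc)
  have r: "real z - real k = real (z - k)" using Suc.prems by simp
  have nz: "real (z - k) \<noteq> 0" using Suc.prems by simp
  have "ff (real z) (Suc k) = fact z / fact (z - k) * real (z - k)"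
    using Suc r by (simp add: ff_Suc)
  also have "\<dots> = fact z / (real (z - k) * fact (z - Suc k)) * real (z - k)" by (simp only: f)
  also have "\<dots> = fact z / fact (z - Suc k)" using nz by (simp add: field_simps)
  finally show ?case .
qed

lemma prod_diff_fact: "(\<Prod>i\<in>{1..<j}. real j - real i) = fact (j - 1)"
proof -
  have "(\<Prod>i\<in>{1..<j}. real j - real i) = (\<Prod>i\<in>{1..<j}. real j - real (j + 1 - Suc i))"
    by (rule prod.atLeastLessThan_rev)
  also have "\<dots> = (\<Prod>i\<in>{1..<j}. real i)"
    by (intro prod.cong refl) auto
  also have "\<dots> = fact (j - 1)"
    by (cases j) (simp_all add: fact_prod atLeastLessThanSuc_atLeastAtMost)
  finally show ?thesis .
qed

lemma prod_shiftK:
  assumes nK: "n \<le> Suc K" and N1: "1 \<le> N"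
  shows "(\<Prod>j\<in>{1..<N}. real (Suc j + K) - real n) = fact (K + N - n) / fact (K + 1 - n)"
  using N1
proof (induction N rule: dec_induct)
  case base then show ?case by simp
next
  case (step N)
  have "(\<Prod>j\<in>{1..<Suc N}. real (Suc j + K) - real n) =
        (\<Prod>j\<in>{1..<N}. real (Suc j + K) - real n) * (real (Suc N + K) - real n)"
    using step nK by (simp add: prod.atLeastLessThan_Suc)
  also have "\<dots> = fact (K + N - n) / fact (K + 1 - n) * real (K + Suc N - n)"
    using step nK by (simp add: of_nat_diff)
  also have "fact (K + Suc N - n) = real (K + Suc N - n) * (fact (K + N - n) :: real)"
  proof -
    have "K + Suc N - n = Suc (K + N - n)" using step nK by simp
    then show ?thesis by (simp only: fact_Suc)
  qed
  then have "fact (K + N - n) / fact (K + 1 - n) * real (K + Suc N - n) = (fact (K + Suc N - n) :: real) / fact (K + 1 - n)"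
    by (simp add: field_simps)
  finally show ?case by simp
qed

lemma prod_split0:
  fixes N :: nat and f :: "nat \<Rightarrow> 'a::comm_monoid_mult"
  shows "1 \<le> N \<Longrightarrow> (\<Prod>i<N. f i) = f 0 * (\<Prod>i\<in>{1..<N}. f i)"
proof -
  assume "1 \<le> N"
  then have "{..<N} = insert 0 {1..<N}" by auto
  then show ?thesis by simp
qed

lemma prod_splitlast:
  fixes N :: nat and f :: "nat \<Rightarrow> 'a::comm_monoid_mult"
  shows "1 \<le> N \<Longrightarrow> (\<Prod>c<N. f c) = f (N - 1) * (\<Prod>j\<in>{1..<N}. f (j - 1))"
proof -
  assume N: "1 \<le> N"
  have "(\<Prod>c<N. f c) = (\<Prod>c<Suc (N - 1). f c)" using N by simp
  also have "\<dots> = (\<Prod>c<N - 1. f c) * f (N - 1)" by (rule prod.lessThan_Suc)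
  also have "(\<Prod>c<N - 1. f c) = (\<Prod>j\<in>{1..<N}. f (j - 1))"
  proof -
    have "(\<Prod>j\<in>{1..<N}. f (j - 1)) = (\<Prod>j\<in>{0 + 1..<(N - 1) + 1}. f (j - 1))" using N by simp
    also have "\<dots> = (\<Prod>j\<in>{0..<N - 1}. f (j + 1 - 1))" by (rule prod.shift_bounds_nat_ivl)
    finally show ?thesis by (simp add: lessThan_atLeast0)
  qed
  finally show ?thesis by (simp add: mult.commute)
qed

lemma eval_final:
  assumes N1: "1 \<le> N" and Nm: "N \<le> m" and n1: "1 \<le> n" and nK: "n \<le> Suc K"
  shows "(\<Prod>i<N. ff (real (xtop N K n i - 1 + (m - N))) (m - N)) * (\<Prod>c<N. 1 / fact (m - N + c)) *
     (\<Prod>j<N. \<Prod>i<j. (real (xtop N K n j) - real (xtop N K n i))) =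
   fact (m + n - N - 1) * fact (K + N - n) / (fact (n - 1) * fact (K + 1 - n) * fact (m - 1)) *
   (\<Prod>j\<in>{1..<N}. fact (j - 1) * fact (K + m - N + j) / (fact (K + j) * fact (m - 1 + j - N)))"
proof -
  define x where "x = xtop N K n"
  have x0: "x 0 = n" using N1 by (simp add: x_def xtop_def)
  have xj: "x j = Suc j + K" if "1 \<le> j" "j < N" for j using that by (simp add: x_def xtop_def)
  define A where "A j = (fact (K + m - N + j) / fact (K + j) :: real)" for j
  define B where "B j = (1 / fact (m - 1 + j - N) :: real)" for j
  define Fj where "Fj j = (fact (j - 1) :: real)" for j
  define C where "C j = real (Suc j + K) - real n" for j
  have P1: "(\<Prod>i<N. ff (real (x i - 1 + (m - N))) (m - N)) = fact (m + n - N - 1) / fact (n - 1) * (\<Prod>j\<in>{1..<N}. A j)"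
  proof -
    have "(\<Prod>i<N. ff (real (x i - 1 + (m - N))) (m - N)) =
          ff (real (x 0 - 1 + (m - N))) (m - N) * (\<Prod>j\<in>{1..<N}. ff (real (x j - 1 + (m - N))) (m - N))"
      by (rule prod_split0[OF N1])
    also have "ff (real (x 0 - 1 + (m - N))) (m - N) = fact (m + n - N - 1) / fact (n - 1)"
    proof -
      have e: "x 0 - 1 + (m - N) = m + n - N - 1" using n1 Nm x0 by simp
      have e2: "m + n - N - 1 - (m - N) = n - 1" using n1 Nm by simp
      have "ff (real (m + n - N - 1)) (m - N) = fact (m + n - N - 1) / fact (m + n - N - 1 - (m - N))"
        by (rule ff_fact) (use n1 Nm in simp)
      then show ?thesis by (simp only: e e2)
    qed
    also have "(\<Prod>j\<in>{1..<N}. ff (real (x j - 1 + (m - N))) (m - N)) = (\<Prod>j\<in>{1..<N}. A j)"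
    proof (rule prod.cong[OF refl])
      fix j assume j: "j \<in> {1..<N}"
      have "ff (real (x j - 1 + (m - N))) (m - N) = ff (real (j + K + (m - N))) (m - N)" using xj j by simp
      also have "\<dots> = fact (j + K + (m - N)) / fact (j + K + (m - N) - (m - N))" by (rule ff_fact) simp
      also have "\<dots> = A j" using Nm by (simp add: A_def add.commute add.left_commute)
      finally show "ff (real (x j - 1 + (m - N))) (m - N) = A j" .
    qed
    finally show ?thesis .
  qed
  have P2: "(\<Prod>c<N. 1 / fact (m - N + c) :: real) = 1 / fact (m - 1) * (\<Prod>j\<in>{1..<N}. B j)"
  proof -
    have "(\<Prod>c<N. 1 / fact (m - N + c) :: real) = 1 / fact (m - N + (N - 1)) * (\<Prod>j\<in>{1..<N}. 1 / fact (m - N + (j - 1)))"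
      by (rule prod_splitlast[OF N1])
    also have "m - N + (N - 1) = m - 1" using N1 Nm by simp
    also have "(\<Prod>j\<in>{1..<N}. 1 / fact (m - N + (j - 1)) :: real) = (\<Prod>j\<in>{1..<N}. B j)"
    proof (rule prod.cong[OF refl])
      fix j assume "j \<in> {1..<N}"
      then have "m - N + (j - 1) = m - 1 + j - N" using Nm by auto
      then show "1 / fact (m - N + (j - 1)) = B j" by (simp add: B_def)
    qed
    finally show ?thesis .
  qed
  have P3: "(\<Prod>j<N. \<Prod>i<j. (real (x j) - real (x i))) = (\<Prod>j\<in>{1..<N}. C j) * (\<Prod>j\<in>{1..<N}. Fj j)"
  proof -
    have "(\<Prod>j<N. \<Prod>i<j. (real (x j) - real (x i))) = (\<Prod>i<0. (real (x 0) - real (x i))) * (\<Prod>j\<in>{1..<N}. \<Prod>i<j. (real (x j) - real (x i)))"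
      by (rule prod_split0[OF N1])
    also have "(\<Prod>j\<in>{1..<N}. \<Prod>i<j. (real (x j) - real (x i))) = (\<Prod>j\<in>{1..<N}. C j * Fj j)"
    proof (rule prod.cong[OF refl])
      fix j assume j: "j \<in> {1..<N}"
      have "(\<Prod>i<j. (real (x j) - real (x i))) = (real (x j) - real (x 0)) * (\<Prod>i\<in>{1..<j}. (real (x j) - real (x i)))"
        by (rule prod_split0) (use j in simp)
      also have "real (x j) - real (x 0) = C j" using xj[of j] j x0 by (simp add: C_def)
      also have "(\<Prod>i\<in>{1..<j}. (real (x j) - real (x i))) = (\<Prod>i\<in>{1..<j}. real j - real i)"
        by (intro prod.cong refl) (use xj j in auto)
      also have "\<dots> = Fj j" unfolding Fj_def by (rule prod_diff_fact)
      finally show "(\<Prod>i<j. (real (x j) - real (x i))) = C j * Fj j" .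
    qed
    finally show ?thesis by (simp add: prod.distrib)
  qed
  have P4: "(\<Prod>j\<in>{1..<N}. C j) = fact (K + N - n) / fact (K + 1 - n)"
    unfolding C_def by (rule prod_shiftK[OF nK N1])
  have P5: "(\<Prod>j\<in>{1..<N}. fact (j - 1) * fact (K + m - N + j) / (fact (K + j) * fact (m - 1 + j - N)) :: real) =
            (\<Prod>j\<in>{1..<N}. Fj j) * (\<Prod>j\<in>{1..<N}. A j) * (\<Prod>j\<in>{1..<N}. B j)"
    unfolding prod.distrib[symmetric] by (intro prod.cong refl) (simp add: Fj_def A_def B_def)
  show ?thesis
    unfolding x_def[symmetric] P1 P2 P3 P4 P5
    by (simp add: field_simps)
qed


theorem mainTheorem5:
  fixes L M N n :: nat
  assumes "L \<le> M" and "N < L" and "1 \<le> N" and "1 \<le> n" and "n \<le> L - N + 1"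
  shows "real (card {c \<in> sp_configs L M N. is_b_at c n (n + M + N - L - 1)}) =
         fact (M + n - L - 1) * fact (L - n) /
           (fact (n - 1) * fact (L + 1 - n - N) * fact (M + N - L - 1))
         * Zsp L (M - 1) (N - 1)"
proof -
  define K where "K = L - N"
  define m where "m = M - K"
  have L: "L = K + N" using assms by (simp add: K_def)
  have M: "M = K + m" using assms by (simp add: K_def m_def)
  have Nm: "N \<le> m" using assms by (simp add: K_def m_def)
  have m1: "1 \<le> m" using Nm assms by simp
  have N0: "0 < N" using assms by simp
  have n1: "1 \<le> n" using assms by simp
  have nK: "n \<le> Suc K" using assms by (simp add: K_def)
  have m0: "n + M + N - L - 1 = n + m - 1" using L M by simp
  define x where "x = xtop N K n"
  have xext: "x \<in> extensional {0..<N}" by (simp add: x_def xtop_def)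
  have xinc: "x i < x (Suc i)" if "Suc i < N" for i
    using that nK by (cases i) (auto simp: x_def xtop_def)
  have xpos: "1 \<le> x i" if "i < N" for i using that n1 by (simp add: x_def xtop_def)
  have "real (card {c \<in> sp_configs L M N. is_b_at c n (n + M + N - L - 1)}) =
        real (card {c \<in> sp_configs (K + N) (K + m) N. is_b_at c n (n + m - 1)})"
    by (simp only: m0) (simp only: L M)
  also have "\<dots> = real (card (Famn N K m n))"
    using card_configs[OF N0 m1 n1 nK] by simp
  also have "\<dots> = real (card (CH N m x))"
    using card_Famn[OF m1 n1 nK N0] by (simp add: x_def)
  also have "\<dots> = det (mat N N (\<lambda>(i,c). g m (Suc c) (x i)))"
    by (rule chain_det[OF xext xinc]) (use xpos in auto)
  also have "\<dots> = (\<Prod>i<N. ff (real (x i - 1 + (m - N))) (m - N)) * (\<Prod>c<N. 1 / fact (m - N + c)) *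
    (\<Prod>j<N. \<Prod>i<j. (real (x j) - real (x i)))"
    by (rule det_g_eval[OF Nm xpos])
  also have "\<dots> = fact (m + n - N - 1) * fact (K + N - n) / (fact (n - 1) * fact (K + 1 - n) * fact (m - 1)) *
   (\<Prod>j\<in>{1..<N}. fact (j - 1) * fact (K + m - N + j) / (fact (K + j) * fact (m - 1 + j - N)))"
    unfolding x_def by (rule eval_final) (use assms Nm nK in auto)
  also have "(\<Prod>j\<in>{1..<N}. fact (j - 1) * fact (K + m - N + j) / (fact (K + j) * fact (m - 1 + j - N)) :: real) =
      Zsp L (M - 1) (N - 1)"
    unfolding Zsp_def
  proof -
    have "{1..N - 1} = {1..<N}" using N0 by auto
    then show "(\<Prod>j\<in>{1..<N}. fact (j - 1) * fact (K + m - N + j) / (fact (K + j) * fact (m - 1 + j - N)) :: real) =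
      (\<Prod>j = 1..N - 1. fact (j - 1) * fact (M - 1 + j - (N - 1)) / (fact (L + j - (N - 1) - 1) * fact (M - 1 + j - L)))"
    proof (simp only:, intro prod.cong refl)
      fix j assume j: "j \<in> {1..<N}"
      have e1: "M - 1 + j - (N - 1) = K + m - N + j" using j Nm M by auto
      have e2: "L + j - (N - 1) - 1 = K + j" using j L by auto
      have e3: "M - 1 + j - L = m - 1 + j - N" using j L M Nm by auto
      show "fact (j - 1) * fact (K + m - N + j) / (fact (K + j) * fact (m - 1 + j - N)) =
         (fact (j - 1) * fact (M - 1 + j - (N - 1)) / (fact (L + j - (N - 1) - 1) * fact (M - 1 + j - L)) :: real)"
        by (simp only: e1 e2 e3)
    qed
  qed
  also have "m + n - N - 1 = M + n - L - 1" using L M by simp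
  also have "K + N - n = L - n" using L by simp
  also have "K + 1 - n = L + 1 - n - N" using L by simp
  also have "m - 1 = M + N - L - 1" using L M by simp
  finally show ?thesis .
qed


end
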